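(* Under the standing assumptions: (i) For any $b$ with $\max_ib_i<b<1$ there exist constants $C_+,C_->0$, independent of $m\in\mathbb{Z}$ and $r\in\mathbb{Z}_{>0}$, such that, writing $r=uN+j$ as below, \[|A(m;r)|<C_+\,a_1^{m}q^{\frac{m^2}{2N}+\frac m2+u}\ (m\ge0),\qquad |A(m;r)|<C_-\,b^{-m}q^{u}\ (m<0).\] (ii) There exist constants $D_+,D_->0$, independent of $m$ and $r$, such that \[|B(r;m)|<D_+\,a_N^{-m}q^{-\frac{m^2}{2N}+\epsilon m-(\frac12+\epsilon)u}\ (m\ge0),\qquad |B(r;m)|<D_-\,a_1^{-m}q^{u}\ (m<0).\]
   Context: Standing assumptions: $0<q<1$, $a_1>\dots>a_N$, $a_i,b_i\in(0,1)$ distinct, $a_1/a_N<q^{-1/2+\epsilon}$ with fixed $\epsilon\in(0,1/2)$; $t>0$, $k\in\mathbb{Z}_{\ge0}$; $(x;q)_\infty=\prod_{j\ge0}(1-xq^j)$; $f(m)=\frac{tq^{1/2+k+m}}{1+tq^{1/2+k+m}}$. For $r\in\mathbb{Z}_{>0}$ write $r=uN+j$ with $j\in\{1,\dots,N\}$, $u\in\mathbb{Z}_{\ge0}$, and set $\tilde a_r=a_jq^u$. Define for $m\in\mathbb{Z}$, $r\in\mathbb{Z}_{>0}$: \[A(m;r)=f(m)\frac{1}{2\pi i}\oint_C\frac{dz}{z^{1+m}}\frac{1}{z-\tilde a_r^{-1}}\prod_{i=1}^N\frac{(a_iz;q)_\infty}{(b_i/z;q)_\infty},\qquad B(r;m)=\tilde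 a_r^{-m}\operatorname*{Res}_{w=\tilde a_r^{-1}}\prod_{i=1}^N\frac{(b_i/w;q)_\infty}{(a_iw;q)_\infty},\] where $C$ is a positively oriented circle centered at $0$ of radius greater than $\max_ib_i$ (the integrand has no singularity at $\tilde a_r^{-1}$, so the value does not depend on the radius). *)

theory Defs
  imports "HOL-Complex_Analysis.Complex_Analysis"
begin

definition qpoch :: "complex \<Rightarrow> real \<Rightarrow> complex" where
  "qpoch x q = (\<Prod>j. 1 - x * complex_of_real (q ^ j))"

definition fB :: "real \<Rightarrow> real \<Rightarrow> nat \<Rightarrow> int \<Rightarrow> real" where
  "fB q t k m = t * q powr (1/2 + real k + real_of_int m) / (1 + t * q powr (1/2 + real k + real_of_int m))"

text \<open>For r > 0 write r = u N + j with j in {1..N}: then u = (r-1) div N, j = (r-1) mod N + 1.\<close>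
definition uidx :: "nat \<Rightarrow> nat \<Rightarrow> nat" where
  "uidx N r = (r - 1) div N"

definition jidx :: "nat \<Rightarrow> nat \<Rightarrow> nat" where
  "jidx N r = (r - 1) mod N + 1"

definition atil :: "real \<Rightarrow> nat \<Rightarrow> (nat \<Rightarrow> real) \<Rightarrow> nat \<Rightarrow> real" where
  "atil q N a r = a (jidx N r) * q ^ uidx N r"

text \<open>A(m;r); the contour is the positively oriented unit circle (radius 1 > max b_i).\<close>
definition Aker :: "real \<Rightarrow> nat \<Rightarrow> (nat \<Rightarrow> real) \<Rightarrow> (nat \<Rightarrow> real) \<Rightarrow> real \<Rightarrow> nat \<Rightarrow> int \<Rightarrow> nat \<Rightarrow> complex" where
  "Aker q N a b t k m r =
     complex_of_real (fB q t k m) * (1 / (2 * pi * \<i>)) *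
     contour_integral (circlepath 0 1)
       (\<lambda>z. 1 / z powi (1 + m) * (1 / (z - complex_of_real (1 / atil q N a r))) *
            (\<Prod>i\<in>{1..N}. qpoch (complex_of_real (a i) * z) q / qpoch (complex_of_real (b i) / z) q))"

definition Bker :: "real \<Rightarrow> nat \<Rightarrow> (nat \<Rightarrow> real) \<Rightarrow> (nat \<Rightarrow> real) \<Rightarrow> nat \<Rightarrow> int \<Rightarrow> complex" where
  "Bker q N a b r m =
     complex_of_real (atil q N a r powr (- real_of_int m)) *
     residue (\<lambda>w. \<Prod>i\<in>{1..N}. qpoch (complex_of_real (b i) / w) q / qpoch (complex_of_real (a i) * w) q)
             (complex_of_real (1 / atil q N a r))"

end

theory Submission
  imports Defs
begin


lemma qpoch_conv:
  assumes "0 < q" "q < 1"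
  shows "convergent_prod (\<lambda>j. 1 - x * complex_of_real (q ^ j))"
proof -
  have "summable (\<lambda>j. norm x * q ^ j)"
    using assms by (intro summable_mult summable_geometric) auto
  moreover have "norm ((1 - x * complex_of_real (q ^ j)) - 1) = norm x * q ^ j" for j
    using assms by (simp add: norm_mult norm_power)
  ultimately have "summable (\<lambda>j. norm ((1 - x * complex_of_real (q ^ j)) - 1))" by simp
  thus ?thesis
    by (intro abs_convergent_prod_imp_convergent_prod summable_imp_abs_convergent_prod)
qed

lemma qpoch_lim:
  assumes "0 < q" "q < 1"
  shows "(\<lambda>n. \<Prod>j<n. 1 - x * complex_of_real (q ^ j)) \<longlonglongrightarrow> qpoch x q"
  using convergent_prod_LIMSEQ[OF qpoch_conv[OF assms, of x]]
  unfolding qpoch_def LIMSEQ_lessThan_iff_atMost by simp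

lemma qpoch_norm_le:
  assumes "0 < q" "q < 1" "\<And>n. norm (\<Prod>j<n. 1 - x * complex_of_real (q ^ j)) \<le> B"
  shows "norm (qpoch x q) \<le> B"
  using tendsto_norm[OF qpoch_lim[OF assms(1,2), of x]] assms(3)
  by (intro LIMSEQ_le_const2) auto

lemma qpoch_norm_ge:
  assumes "0 < q" "q < 1" "\<And>n. n \<ge> n0 \<Longrightarrow> B \<le> norm (\<Prod>j<n. 1 - x * complex_of_real (q ^ j))"
  shows "B \<le> norm (qpoch x q)"
  using tendsto_norm[OF qpoch_lim[OF assms(1,2), of x]] assms(3)
  by (intro LIMSEQ_le_const) auto

lemma qpoch_zero:
  assumes "0 < q" "q < 1" "x * complex_of_real (q ^ u) = 1"
  shows "qpoch x q = 0"
proof -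
  have "(\<lambda>n. \<Prod>j<n. 1 - x * complex_of_real (q ^ j)) \<longlonglongrightarrow> 0"
  proof (rule tendsto_eventually)
    show "\<forall>\<^sub>F n in sequentially. (\<Prod>j<n. 1 - x * complex_of_real (q ^ j)) = 0"
      using eventually_gt_at_top[of u]
      by eventually_elim (use assms(3) in \<open>auto intro!: prod_zero bexI[of _ u]\<close>)
  qed
  thus ?thesis using LIMSEQ_unique qpoch_lim[OF assms(1,2)] by blast
qed

lemma qpoch_nonzero:
  assumes "0 < q" "q < 1" "\<And>j. x * complex_of_real (q ^ j) \<noteq> 1"
  shows "qpoch x q \<noteq> 0"
  unfolding qpoch_def
  by (rule prodinf_nonzero[OF qpoch_conv[OF assms(1,2)]]) (use assms(3) in auto)

lemma qpoch_holo:
  assumes "0 < q" "q < 1"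
  shows "(\<lambda>x. qpoch x q) holomorphic_on UNIV"
proof (rule holomorphic_uniform_sequence[where f = "\<lambda>n x. \<Prod>j<n. 1 - x * complex_of_real (q ^ j)"])
  fix n show "(\<lambda>x. \<Prod>j<n. 1 - x * complex_of_real (q ^ j)) holomorphic_on UNIV"
    by (intro holomorphic_intros)
next
  fix x :: complex
  let ?A = "cball x 1"
  have "uniformly_convergent_on ?A (\<lambda>N y. \<Prod>n<N. 1 + (- y * complex_of_real (q ^ n)))"
  proof (rule uniformly_convergent_on_prod)
    show "continuous_on ?A (\<lambda>y. - y * complex_of_real (q ^ n))" for n
      by (intro continuous_intros)
    show "compact ?A" by simp
    show "uniformly_convergent_on ?A (\<lambda>N y. \<Sum>n<N. norm (- y * complex_of_real (q ^ n)))"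
    proof (rule Weierstrass_m_test')
      fix n y assume y: "y \<in> ?A"
      have "norm y \<le> norm x + 1" using y norm_triangle_sub[of y x]
        by (simp add: dist_norm norm_minus_commute)
      thus "norm (norm (- y * complex_of_real (q ^ n))) \<le> (norm x + 1) * q ^ n"
        using assms by (simp add: norm_mult norm_power mult_right_mono)
    next
      show "summable (\<lambda>n. (norm x + 1) * q ^ n)"
        using assms by (intro summable_mult summable_geometric) auto
    qed
  qed
  hence uc: "uniformly_convergent_on ?A (\<lambda>N y. \<Prod>n<N. 1 - y * complex_of_real (q ^ n))"
    by simp
  have ul: "uniform_limit ?A (\<lambda>N y. \<Prod>n<N. 1 - y * complex_of_real (q ^ n))
              (\<lambda>y. lim (\<lambda>N. \<Prod>n<N. 1 - y * complex_of_real (q ^ n))) sequentially"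
    using uc uniformly_convergent_uniform_limit_iff by blast
  have "uniform_limit ?A (\<lambda>N y. \<Prod>n<N. 1 - y * complex_of_real (q ^ n)) (\<lambda>y. qpoch y q) sequentially"
    using ul by (subst (asm) uniform_limit_cong'[where g = "\<lambda>N y. \<Prod>n<N. 1 - y * complex_of_real (q ^ n)" and i = "\<lambda>y. qpoch y q"])
       (use qpoch_lim[OF assms] limI in auto)
  thus "\<exists>d>0. cball x d \<subseteq> UNIV \<and> uniform_limit (cball x d) (\<lambda>n x. \<Prod>j<n. 1 - x * complex_of_real (q ^ j)) (\<lambda>x. qpoch x q) sequentially"
    by (intro exI[of _ 1]) auto
qed auto



lemma norm_pprod_le:
  fixes q :: real and x :: complex
  shows "norm (\<Prod>j<n. 1 - x * complex_of_real (q ^ j)) \<le> (\<Prod>j<n. 1 + norm x * \<bar>q\<bar> ^ j)"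
proof -
  have "norm (\<Prod>j<n. 1 - x * complex_of_real (q ^ j)) = (\<Prod>j<n. norm (1 - x * complex_of_real (q ^ j)))"
    by (simp add: prod_norm)
  also have "\<dots> \<le> (\<Prod>j<n. 1 + norm x * \<bar>q\<bar> ^ j)"
  proof (rule prod_mono)
    fix j
    have "norm (1 - x * complex_of_real (q ^ j)) \<le> norm (1::complex) + norm (x * complex_of_real (q ^ j))"
      by (rule norm_triangle_ineq4)
    thus "0 \<le> norm (1 - x * complex_of_real (q ^ j)) \<and> norm (1 - x * complex_of_real (q ^ j)) \<le> 1 + norm x * \<bar>q\<bar> ^ j"
      by (simp add: norm_mult norm_power power_abs)
  qed
  finally show ?thesis .
qed

lemma prod_exp_bound:
  fixes X q :: real
  assumes "0 \<le> X" "0 < q" "q < 1"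
  shows "(\<Prod>j<n. 1 + X * q ^ j) \<le> exp (X / (1 - q))"
proof -
  have "(\<Prod>j<n. 1 + X * q ^ j) \<le> (\<Prod>j<n. exp (X * q ^ j))"
  proof (rule prod_mono)
    fix j
    have "0 \<le> X * q ^ j" using assms by simp
    thus "0 \<le> 1 + X * q ^ j \<and> 1 + X * q ^ j \<le> exp (X * q ^ j)"
      using exp_ge_add_one_self[of "X * q ^ j"] by simp
  qed
  also have "\<dots> = exp (\<Sum>j<n. X * q ^ j)" by (simp add: exp_sum)
  also have "(\<Sum>j<n. X * q ^ j) \<le> (\<Sum>j. X * q ^ j)"
    using assms by (intro sum_le_suminf summable_mult summable_geometric) auto
  also have "(\<Sum>j. X * q ^ j) = X / (1 - q)"
    using assms by (simp add: suminf_mult suminf_geometric divide_simps)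
  finally show ?thesis by simp
qed

lemma qpoch_upper:
  fixes q X :: real and x :: complex
  assumes "0 < q" "q < 1" "norm x \<le> X"
  shows "norm (qpoch x q) \<le> exp (X / (1 - q))"
proof (rule qpoch_norm_le[OF assms(1,2)])
  fix n
  have "norm (\<Prod>j<n. 1 - x * complex_of_real (q ^ j)) \<le> (\<Prod>j<n. 1 + norm x * q ^ j)"
    using norm_pprod_le[where n=n and x=x and q=q] assms by simp
  also have "\<dots> \<le> (\<Prod>j<n. 1 + X * q ^ j)"
    using assms by (intro prod_mono) (auto intro!: mult_right_mono)
  also have "\<dots> \<le> exp (X / (1 - q))"
    using assms norm_ge_zero[of x] by (intro prod_exp_bound) linarith+
  finally show "norm (\<Prod>j<n. 1 - x * complex_of_real (q ^ j)) \<le> exp (X / (1 - q))" .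
qed

lemma one_minus_ge_exp:
  fixes z \<beta> :: real
  assumes "0 \<le> z" "z \<le> \<beta>" "\<beta> < 1"
  shows "exp (- z / (1 - \<beta>)) \<le> 1 - z"
proof -
  have "exp (- z / (1 - \<beta>)) \<le> exp (- z / (1 - z))"
  proof -
    have "z / (1 - z) \<le> z / (1 - \<beta>)" using assms by (intro frac_le) auto
    thus ?thesis by simp
  qed
  also have "exp (- z / (1 - z)) = inverse (exp (z / (1 - z)))"
    by (simp add: exp_minus)
  also have "\<dots> \<le> inverse (1 + z / (1 - z))"
  proof -
    have "0 < 1 - z" using assms by linarith
    hence "0 \<le> z / (1 - z)" using assms by (intro divide_nonneg_pos) auto
    hence "0 < 1 + z / (1 - z)" by linarith
    thus ?thesis by (rule le_imp_inverse_le[OF exp_ge_add_one_self])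
  qed
  also have "inverse (1 + z / (1 - z)) = 1 - z"
    using assms by (simp add: field_simps)
  finally show ?thesis .
qed

lemma prod_lower_exp:
  fixes \<gamma> q :: real and A :: "nat set"
  assumes "0 \<le> \<gamma>" "\<gamma> < 1" "0 < q" "q < 1" "finite A"
  shows "exp (- \<gamma> / ((1 - \<gamma>) * (1 - q))) \<le> (\<Prod>k\<in>A. 1 - \<gamma> * q ^ k)"
proof -
  have "(\<Sum>k\<in>A. q ^ k) \<le> (\<Sum>k. q ^ k)"
    using sum_le_suminf[of "\<lambda>k. q ^ k" A] assms by (auto intro: summable_geometric)
  also have "\<dots> = 1 / (1 - q)" using assms by (simp add: suminf_geometric)
  finally have s: "(\<Sum>k\<in>A. q ^ k) \<le> 1 / (1 - q)" .
  have "exp (- \<gamma> / ((1 - \<gamma>) * (1 - q))) \<le> exp (\<Sum>k\<in>A. - (\<gamma> * q ^ k) / (1 - \<gamma>))"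
  proof -
    have "(\<Sum>k\<in>A. - (\<gamma> * q ^ k) / (1 - \<gamma>)) = - (\<gamma> / (1 - \<gamma>)) * (\<Sum>k\<in>A. q ^ k)"
      by (simp add: sum_distrib_left sum_negf)
    also have "\<dots> \<ge> - (\<gamma> / (1 - \<gamma>)) * (1 / (1 - q))"
      using s assms by (intro mult_left_mono_neg) auto
    finally show ?thesis by (simp add: field_simps)
  qed
  also have "\<dots> = (\<Prod>k\<in>A. exp (- (\<gamma> * q ^ k) / (1 - \<gamma>)))" using assms(5) by (simp add: exp_sum)
  also have "\<dots> \<le> (\<Prod>k\<in>A. 1 - \<gamma> * q ^ k)"
  proof (rule prod_mono)
    fix k
    have "q ^ k \<le> 1" using assms by (simp add: power_le_one)
    hence "\<gamma> * q ^ k \<le> \<gamma>" using assms by (simp add: mult_left_le)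
    thus "0 \<le> exp (- (\<gamma> * q ^ k) / (1 - \<gamma>)) \<and> exp (- (\<gamma> * q ^ k) / (1 - \<gamma>)) \<le> 1 - \<gamma> * q ^ k"
      using one_minus_ge_exp[of "\<gamma> * q ^ k" \<gamma>] assms by simp
  qed
  finally show ?thesis .
qed

lemma qpoch_lower:
  fixes q \<beta> :: real and y :: complex
  assumes "0 < q" "q < 1" "norm y \<le> \<beta>" "\<beta> < 1"
  shows "exp (- \<beta> / ((1 - \<beta>) * (1 - q))) \<le> norm (qpoch y q)"
proof (rule qpoch_norm_ge[OF assms(1,2), of 0])
  fix n :: nat
  have b0: "0 \<le> \<beta>" using assms norm_ge_zero[of y] by linarith
  have "exp (- \<beta> / ((1 - \<beta>) * (1 - q))) \<le> (\<Prod>j<n. 1 - \<beta> * q ^ j)"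
    using b0 assms by (intro prod_lower_exp) auto
  also have "\<dots> \<le> (\<Prod>j<n. norm (1 - y * complex_of_real (q ^ j)))"
  proof (rule prod_mono)
    fix j
    have qj: "0 \<le> q ^ j" "q ^ j \<le> 1" using assms by (auto simp: power_le_one)
    have "norm y * q ^ j \<le> \<beta> * q ^ j" using assms qj by (intro mult_right_mono) auto
    moreover have "\<beta> * q ^ j \<le> \<beta>" using b0 qj by (simp add: mult_left_le)
    moreover have "norm (1::complex) - norm (y * complex_of_real (q ^ j)) \<le> norm (1 - y * complex_of_real (q ^ j))"
      by (rule norm_triangle_ineq2)
    moreover have "norm (y * complex_of_real (q ^ j)) = norm y * q ^ j"
      using qj assms by (simp add: norm_mult norm_power)
    ultimately show "0 \<le> 1 - \<beta> * q ^ j \<and> 1 - \<beta> * q ^ j \<le> norm (1 - y * complex_of_real (q ^ j))"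
      using assms qj by (simp only: norm_one) linarith
  qed
  also have "\<dots> = norm (\<Prod>j<n. 1 - y * complex_of_real (q ^ j))" by (simp add: prod_norm)
  finally show "exp (- \<beta> / ((1 - \<beta>) * (1 - q))) \<le> norm (\<Prod>j<n. 1 - y * complex_of_real (q ^ j))" .
qed



lemma prodA_bound:
  fixes h :: real
  assumes h: "0 < h" "h < 1"
  shows "(\<Prod>j<n. 1 + h ^ (2*j+1) / h ^ (2*p))
           \<le> (\<Prod>i<p. 1 + h ^ (2*i+1)) * exp (h / (1 - h^2)) / h ^ (p^2)"
proof (induction p arbitrary: n)
  case 0
  have hsq: "h * (h^2)^j = h ^ (2*j+1)" for j by (simp add: power_mult)
  have "(\<Prod>j<n. 1 + h ^ (2*j+1)) = (\<Prod>j<n. 1 + h * (h^2) ^ j)"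
    by (intro prod.cong refl) (simp add: hsq)
  also have "\<dots> \<le> exp (h / (1 - h^2))"
    using h by (intro prod_exp_bound) (auto simp: power_less_one_iff)
  finally show ?case by simp
next
  case (Suc p)
  have hp: "0 < h ^ k" for k using h by simp
  have h2: "h^2 < 1" using h by (simp add: power_less_one_iff)
  have "0 \<le> h / (1 - h^2)" using h h2 by (intro divide_nonneg_pos) auto
  hence E1: "1 \<le> exp (h / (1 - h^2))" by simp
  have P1: "1 \<le> (\<Prod>i<k. 1 + h ^ (2*i+1))" for k
    using h by (intro prod_ge_1) auto
  have hle: "h ^ k \<le> 1" for k using h by (simp add: power_le_one)
  show ?case
  proof (cases n)
    case 0
    have "1 \<le> (\<Prod>i<Suc p. 1 + h ^ (2*i+1)) * exp (h / (1 - h^2))"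
    proof -
      have "1 * 1 \<le> (\<Prod>i<Suc p. 1 + h ^ (2*i+1)) * exp (h / (1 - h^2))"
        by (rule mult_mono[OF P1[of "Suc p"] E1]) (use P1[of "Suc p"] in auto)
      thus ?thesis by simp
    qed
    also have "\<dots> \<le> (\<Prod>i<Suc p. 1 + h ^ (2*i+1)) * exp (h / (1 - h^2)) / h ^ (Suc p ^ 2)"
      using hle[of "Suc p ^ 2"] hp[of "Suc p ^ 2"] P1[of "Suc p"] E1
      by (simp add: le_divide_eq mult_left_le)
    finally show ?thesis using 0 by simp
  next
    case (Suc n')
    have "(\<Prod>j<n. 1 + h ^ (2*j+1) / h ^ (2*Suc p))
          = (1 + h / h ^ (2*Suc p)) * (\<Prod>j<n'. 1 + h ^ (2*Suc j+1) / h ^ (2*Suc p))"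
      unfolding Suc by (subst prod.lessThan_Suc_shift) simp
    also have "(\<Prod>j<n'. 1 + h ^ (2*Suc j+1) / h ^ (2*Suc p)) = (\<Prod>j<n'. 1 + h ^ (2*j+1) / h ^ (2*p))"
    proof (intro prod.cong refl)
      fix j
      have "h ^ (2*Suc j+1) / h ^ (2*Suc p) = (h^2 * h ^ (2*j+1)) / (h^2 * h ^ (2*p))"
        by (simp add: power_add power_mult_distrib mult_ac power2_eq_square)
      also have "\<dots> = h ^ (2*j+1) / h ^ (2*p)" using h by simp
      finally show "1 + h ^ (2*Suc j+1) / h ^ (2*Suc p) = 1 + h ^ (2*j+1) / h ^ (2*p)" by simp
    qed
    also have "(1 + h / h ^ (2*Suc p)) * (\<Prod>j<n'. 1 + h ^ (2*j+1) / h ^ (2*p))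
          \<le> (1 + h / h ^ (2*Suc p)) * ((\<Prod>i<p. 1 + h ^ (2*i+1)) * exp (h / (1 - h^2)) / h ^ (p^2))"
      using Suc.IH[of n'] h by (intro mult_left_mono) auto
    also have "\<dots> = (\<Prod>i<Suc p. 1 + h ^ (2*i+1)) * exp (h / (1 - h^2)) / h ^ (Suc p ^ 2)"
    proof -
      have "Suc p ^ 2 = p^2 + (2*p+1)" by (simp add: power2_eq_square)
      hence e: "h ^ (Suc p ^ 2) = h ^ (p^2) * h ^ (2*p+1)"
        by (simp only: power_add)
      have e2: "h ^ (2 * Suc p) = h ^ (2*p+1) * h" by (simp add: power_add)
      show ?thesis
        using hp[of "p^2"] hp[of "2*p+1"] h
        by (simp add: e e2 field_simps)
    qed
    finally show ?thesis .
  qed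
qed

lemma qpoch_upperA:
  fixes h :: real and x :: complex
  assumes h: "0 < h" "h < 1" and x: "norm x \<le> h / h ^ (2*p)"
  shows "norm (qpoch x (h^2)) \<le> exp (h / (1 - h^2)) ^ 2 / h ^ (p^2)"
proof (rule qpoch_norm_le)
  have hsq: "h * (h^2)^j = h ^ (2*j+1)" for j by (simp add: power_mult)
  show "0 < h^2" "h^2 < 1" using h by (auto simp: power_less_one_iff)
  fix n
  have "norm (\<Prod>j<n. 1 - x * complex_of_real ((h^2) ^ j)) \<le> (\<Prod>j<n. 1 + norm x * \<bar>h^2\<bar> ^ j)"
    by (rule norm_pprod_le)
  also have "\<dots> \<le> (\<Prod>j<n. 1 + h ^ (2*j+1) / h ^ (2*p))"
  proof (rule prod_mono)
    fix j
    have "norm x * \<bar>h^2\<bar> ^ j \<le> h / h ^ (2*p) * (h^2) ^ j"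
      using x h by (intro mult_mono) auto
    also have "\<dots> = h ^ (2*j+1) / h ^ (2*p)"
      by (simp add: power_mult[symmetric] power_add mult.commute)
    finally show "0 \<le> 1 + norm x * \<bar>h^2\<bar> ^ j \<and> 1 + norm x * \<bar>h^2\<bar> ^ j \<le> 1 + h ^ (2*j+1) / h ^ (2*p)"
      by (simp add: add_nonneg_nonneg)
  qed
  also have "\<dots> \<le> (\<Prod>i<p. 1 + h ^ (2*i+1)) * exp (h / (1 - h^2)) / h ^ (p^2)"
    by (rule prodA_bound[OF h])
  also have "\<dots> \<le> exp (h / (1 - h^2)) * exp (h / (1 - h^2)) / h ^ (p^2)"
  proof -
    have "(\<Prod>i<p. 1 + h ^ (2*i+1)) = (\<Prod>i<p. 1 + h * (h^2) ^ i)"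
      by (intro prod.cong refl) (simp add: hsq)
    also have "\<dots> \<le> exp (h / (1 - h^2))"
      using h by (intro prod_exp_bound) (auto simp: power_less_one_iff)
    finally show ?thesis using h by (intro divide_right_mono mult_right_mono) auto
  qed
  finally show "norm (\<Prod>j<n. 1 - x * complex_of_real ((h^2) ^ j)) \<le> exp (h / (1 - h^2)) ^ 2 / h ^ (p^2)"
    by (simp add: power2_eq_square)
qed

lemma circ_eq:
  assumes S: "open S" and G: "G holomorphic_on S" and r: "0 < r1" "0 < r2"
    and ann: "\<And>z. min r1 r2 \<le> norm z \<Longrightarrow> norm z \<le> max r1 r2 \<Longrightarrow> z \<in> S"
  shows "contour_integral (circlepath 0 r1) G = contour_integral (circlepath 0 r2) G"
proof (rule Cauchy_theorem_homotopic_loops[OF _ S G])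
  show "homotopic_loops S (circlepath 0 r1) (circlepath 0 r2)"
  proof (rule homotopic_loops_linear)
    fix t :: real assume "t \<in> {0..1}"
    show "closed_segment (circlepath 0 r1 t) (circlepath 0 r2 t) \<subseteq> S"
    proof
      fix w assume "w \<in> closed_segment (circlepath 0 r1 t) (circlepath 0 r2 t)"
      then obtain s where s: "0 \<le> s" "s \<le> 1" and w: "w = (1 - s) *\<^sub>R circlepath 0 r1 t + s *\<^sub>R circlepath 0 r2 t"
        unfolding closed_segment_def by auto
      define e where "e = exp (2 * of_real pi * \<i> * of_real t)"
      have ne: "norm e = 1" unfolding e_def by (simp add: norm_exp_eq_Re)
      have we: "w = complex_of_real ((1 - s) * r1 + s * r2) * e"
        unfolding w circlepath e_def by (simp add: scaleR_conv_of_real algebra_simps)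
      have "norm w = \<bar>(1 - s) * r1 + s * r2\<bar>"
        by (simp only: we norm_mult norm_of_real ne mult_1_right)
      hence nw: "norm w = (1 - s) * r1 + s * r2"
        using s r by simp
      have e1: "(1 - s) * r1 + s * r2 = r1 + s * (r2 - r1)" by (simp add: algebra_simps)
      have e2: "(1 - s) * r1 + s * r2 = r2 + (1 - s) * (r1 - r2)" by (simp add: algebra_simps)
      have "min r1 r2 \<le> (1 - s) * r1 + s * r2 \<and> (1 - s) * r1 + s * r2 \<le> max r1 r2"
      proof (cases "r1 \<le> r2")
        case True
        have "0 \<le> s * (r2 - r1)" "(1 - s) * (r1 - r2) \<le> 0"
          using True s by (auto intro: mult_nonneg_nonneg mult_nonneg_nonpos)
        thus ?thesis using True e1 e2 by (auto simp: min_def max_def)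
      next
        case False
        have "s * (r2 - r1) \<le> 0" "0 \<le> (1 - s) * (r1 - r2)"
          using False s by (auto intro: mult_nonneg_nonneg mult_nonneg_nonpos)
        thus ?thesis using False e1 e2 by (auto simp: min_def max_def)
      qed
      thus "w \<in> S" using ann nw by simp
    qed
  qed auto
qed auto



lemma qpoch_holo_comp:
  assumes "0 < q" "q < 1" "f holomorphic_on A"
  shows "(\<lambda>z. qpoch (f z) q) holomorphic_on A"
  using holomorphic_on_compose[OF assms(3) holomorphic_on_subset[OF qpoch_holo[OF assms(1,2)]]]
  by (simp add: o_def)

locale setting =
  fixes q \<epsilon> :: real and N :: nat and a b :: "nat \<Rightarrow> real"
  assumes q: "0 < q" "q < 1"
    and N: "N \<ge> 1"
    and a_dec: "\<And>i j. 1 \<le> i \<Longrightarrow> i < j \<Longrightarrow> j \<le> N \<Longrightarrow> a j < a i"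
    and a_range: "\<And>i. 1 \<le> i \<Longrightarrow> i \<le> N \<Longrightarrow> 0 < a i \<and> a i < 1"
    and b_range: "\<And>i. 1 \<le> i \<Longrightarrow> i \<le> N \<Longrightarrow> 0 < b i \<and> b i < 1"
    and eps: "0 < \<epsilon>" "\<epsilon> < 1/2"
    and ratio: "a 1 / a N < q powr (-1/2 + \<epsilon>)"
begin

definition Bm where "Bm = Max (b ` {1..N})"

lemma Bm: "0 < Bm" "Bm < 1" "\<And>i. i \<in> {1..N} \<Longrightarrow> b i \<le> Bm"
proof -
  have ne: "b ` {1..N} \<noteq> {}" using N by auto
  have fin: "finite (b ` {1..N})" by simp
  have "Bm \<in> b ` {1..N}" unfolding Bm_def using Max_in[OF fin ne] .
  then obtain i where "i \<in> {1..N}" "Bm = b i" by auto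
  thus "0 < Bm" "Bm < 1" using b_range by auto
  show "\<And>i. i \<in> {1..N} \<Longrightarrow> b i \<le> Bm" unfolding Bm_def using fin by auto
qed

lemma a_pos: "i \<in> {1..N} \<Longrightarrow> 0 < a i" and a_lt1: "i \<in> {1..N} \<Longrightarrow> a i < 1"
  using a_range by auto

lemma a_le1: "i \<in> {1..N} \<Longrightarrow> a i \<le> a 1"
  using a_dec[of 1 i] by (cases "i = 1") auto

lemma a_geN: "i \<in> {1..N} \<Longrightarrow> a N \<le> a i"
  using a_dec[of i N] by (cases "i = N") auto

lemma j_range: "r > 0 \<Longrightarrow> jidx N r \<in> {1..N}"
  using N unfolding jidx_def by (auto simp: Suc_le_eq)

lemma atil_eq: "atil q N a r = a (jidx N r) * q ^ uidx N r"
  by (simp add: atil_def)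

lemma atil_pos: "r > 0 \<Longrightarrow> 0 < atil q N a r"
  using j_range a_pos q by (simp add: atil_eq)

lemma atil_le: "r > 0 \<Longrightarrow> atil q N a r \<le> a 1 * q ^ uidx N r"
  using j_range a_le1 q by (simp add: atil_eq mult_right_mono)

lemma atil_lt1: "r > 0 \<Longrightarrow> atil q N a r < 1"
proof -
  assume r: "r > 0"
  have "atil q N a r \<le> a (jidx N r)"
    using j_range[OF r] a_pos q by (simp add: atil_eq mult_left_le power_le_one)
  thus ?thesis using a_lt1[OF j_range[OF r]] by linarith
qed

definition PA :: "complex \<Rightarrow> complex" where
  "PA z = (\<Prod>i\<in>{1..N}. qpoch (complex_of_real (a i) * z) q / qpoch (complex_of_real (b i) / z) q)"

definition SA where "SA = {z. Bm < norm z}"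

lemma SA_open: "open SA"
  unfolding SA_def by (intro open_Collect_less continuous_intros)

lemma SA_nz: "z \<in> SA \<Longrightarrow> z \<noteq> 0"
  using Bm unfolding SA_def by auto

lemma PA_holo: "PA holomorphic_on SA"
  unfolding PA_def
proof (intro holomorphic_on_prod holomorphic_on_divide)
  fix i assume i: "i \<in> {1..N}"
  show "(\<lambda>z. qpoch (complex_of_real (a i) * z) q) holomorphic_on SA"
    by (intro qpoch_holo_comp q holomorphic_intros)
  show "(\<lambda>z. qpoch (complex_of_real (b i) / z) q) holomorphic_on SA"
    using SA_nz by (intro qpoch_holo_comp q holomorphic_intros) auto
  show "qpoch (complex_of_real (b i) / z) q \<noteq> 0" if z: "z \<in> SA" for z
  proof (rule qpoch_nonzero[OF q])
    fix j :: nat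
    have "norm (complex_of_real (b i) / z * complex_of_real (q ^ j)) = b i / norm z * q ^ j"
      using b_range[of i] i q by (simp add: norm_mult norm_divide norm_power)
    also have "\<dots> \<le> b i / norm z" using q b_range[of i] i SA_nz[OF z]
      by (intro mult_left_le) (auto simp: power_le_one)
    also have "\<dots> < 1" using z Bm(3)[OF i] b_range[of i] i unfolding SA_def by (simp add: divide_less_eq)
    finally show "complex_of_real (b i) / z * complex_of_real (q ^ j) \<noteq> 1" by auto
  qed
qed

lemma fB_nonneg: "t > 0 \<Longrightarrow> 0 \<le> fB q t k m"
  unfolding fB_def using q by (intro divide_nonneg_pos add_pos_nonneg) auto

lemma A_bound_gen:
  assumes r: "r > 0" and R: "Bm < R" "R \<noteq> 1 / atil q N a r"
    and M: "\<And>z. norm z = R \<Longrightarrow> norm (PA z) \<le> M"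
    and d: "0 < d" "\<And>z. norm z = R \<Longrightarrow> d \<le> norm (z - complex_of_real (1 / atil q N a r))"
    and t: "t > 0"
  shows "norm (Aker q N a b t k m r) \<le> fB q t k m * M * R powr (- real_of_int m) / d"
proof -
  define c where "c = 1 / atil q N a r"
  have at: "0 < atil q N a r" "atil q N a r < 1" using atil_pos[OF r] atil_lt1[OF r] by auto
  have c1: "1 < c" unfolding c_def using at by (simp add: less_divide_eq)
  have R0: "0 < R" using R Bm by linarith
  define g where "g z = PA z / z powi (1 + m)" for z
  have g_holo: "g holomorphic_on SA"
    unfolding g_def using SA_nz
    by (intro holomorphic_on_divide PA_holo holomorphic_intros) (auto simp: power_int_eq_0_iff)
  have cS: "complex_of_real c \<in> SA" using c1 Bm unfolding SA_def by simp
  define j where "j = jidx N r"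
  have j: "j \<in> {1..N}" unfolding j_def by (rule j_range[OF r])
  have "qpoch (complex_of_real (a j) * complex_of_real c) q = 0"
  proof (rule qpoch_zero[OF q, of _ "uidx N r"])
    have "a j * c * q ^ uidx N r = 1"
      unfolding c_def using at q a_pos[OF j] by (simp add: atil_eq j_def)
    thus "complex_of_real (a j) * complex_of_real c * complex_of_real (q ^ uidx N r) = 1"
      by (metis of_real_1 of_real_mult)
  qed
  hence PA0: "PA (complex_of_real c) = 0" unfolding PA_def using j by (intro prod_zero) (auto intro!: bexI[of _ j])
  hence g0: "g (complex_of_real c) = 0" by (simp add: g_def)
  define G where "G z = (if z = complex_of_real c then deriv g (complex_of_real c)
                         else (g z - g (complex_of_real c)) / (z - complex_of_real c))" for z
  have G_holo: "G holomorphic_on SA"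
    unfolding G_def[abs_def] using SA_open cS by (intro pole_lemma g_holo) (simp add: interior_open[OF SA_open])
  define \<iota> where "\<iota> z = 1 / z powi (1 + m) * (1 / (z - complex_of_real c)) * PA z" for z
  have \<iota>G: "\<iota> z = G z" if "z \<noteq> complex_of_real c" for z
    using that by (simp add: \<iota>_def G_def g0 g_def PA0 divide_inverse mult_ac)
  have Aeq: "Aker q N a b t k m r = complex_of_real (fB q t k m) * (1 / (2 * pi * \<i>)) * contour_integral (circlepath 0 1) \<iota>"
    unfolding Aker_def \<iota>_def PA_def c_def ..
  have "contour_integral (circlepath 0 1) \<iota> = contour_integral (circlepath 0 1) G"
  proof (rule contour_integral_eq)
    fix z assume "z \<in> path_image (circlepath 0 1)"
    hence "norm z = 1" by simp
    hence "z \<noteq> complex_of_real c" using c1 by auto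
    thus "\<iota> z = G z" by (rule \<iota>G)
  qed
  also have "\<dots> = contour_integral (circlepath 0 R) G"
    by (rule circ_eq[OF SA_open G_holo]) (use R0 Bm R in \<open>auto simp: SA_def\<close>)
  finally have ieq: "contour_integral (circlepath 0 1) \<iota> = contour_integral (circlepath 0 R) G" .
  have "G contour_integrable_on circlepath 0 R"
    by (rule contour_integrable_holomorphic_simple[OF G_holo SA_open]) (use R0 R in \<open>auto simp: SA_def\<close>)
  hence hci: "(G has_contour_integral contour_integral (circlepath 0 R) G) (circlepath 0 R)"
    by (rule has_contour_integral_integral)
  have M0: "0 \<le> M" using M[of "complex_of_real R"] R0 norm_ge_zero[of "PA (complex_of_real R)"] by (simp del: norm_ge_zero)
  define B0 where "B0 = M / (R powr (1 + real_of_int m) * d)"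
  have B00: "0 \<le> B0" unfolding B0_def using M0 d R0 by simp
  have Gb: "norm (G x) \<le> B0" if x: "norm (x - 0) = R" for x
  proof -
    have nx: "norm x = R" using x by simp
    have xc: "x \<noteq> complex_of_real c"
    proof
      assume "x = complex_of_real c"
      hence "norm x = c" using c1 by simp
      thus False using nx R(2) unfolding c_def by simp
    qed
    have Gx: "G x = PA x / x powi (1 + m) / (x - complex_of_real c)"
      using xc by (simp add: G_def g0 g_def PA0)
    hence "norm (G x) = norm (PA x) / (R powr (1 + real_of_int m) * norm (x - complex_of_real c))"
    proof -
      have e1: "R powr (1 + real_of_int m) = R powi (1 + m)" using powr_real_of_int'[of R "1+m"] R0 by simp
      have "norm (x powi (1 + m)) = R powr (1 + real_of_int m)" by (simp add: norm_power_int nx e1)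
      thus ?thesis using Gx by (simp add: norm_divide norm_mult)
    qed
    also have "\<dots> \<le> M / (R powr (1 + real_of_int m) * d)"
      using M[OF nx] d(2)[OF nx] d(1) R0 M0 unfolding c_def
      by (intro frac_le mult_left_mono mult_pos_pos) auto
    finally show ?thesis unfolding B0_def .
  qed
  have ib: "norm (contour_integral (circlepath 0 R) G) \<le> B0 * (2 * pi * R)"
    by (rule has_contour_integral_bound_circlepath[OF hci B00 R0 Gb])
  have "norm (Aker q N a b t k m r) = fB q t k m * (1 / (2 * pi)) * norm (contour_integral (circlepath 0 R) G)"
    unfolding Aeq ieq using fB_nonneg[OF t] by (simp add: norm_mult norm_divide)
  also have "\<dots> \<le> fB q t k m * (1 / (2 * pi)) * (B0 * (2 * pi * R))"
    using fB_nonneg[OF t] by (intro mult_left_mono ib) auto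
  also have "\<dots> = fB q t k m * M * (R / R powr (1 + real_of_int m)) / d"
    unfolding B0_def using d R0 by (simp add: field_simps)
  also have "R / R powr (1 + real_of_int m) = R powr (- real_of_int m)"
    using R0 by (simp add: powr_add powr_minus field_simps)
  finally show ?thesis .
qed

end


context setting begin

lemma PA_bound:
  assumes R: "Bm < R" and X: "a 1 * R \<le> X"
    and U: "\<And>x. norm x \<le> X \<Longrightarrow> norm (qpoch x q) \<le> U"
    and z: "norm z = R" and \<beta>: "Bm / R \<le> \<beta>" "\<beta> < 1"
  shows "norm (PA z) \<le> (U / exp (- \<beta> / ((1 - \<beta>) * (1 - q)))) ^ N"
proof -
  define L where "L = exp (- \<beta> / ((1 - \<beta>) * (1 - q)))"
  have R0: "0 < R" using R Bm by linarith
  have U0: "0 \<le> U" using U[of 0] X a_pos[of 1] N R0 q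
    by (smt (verit, ccfv_SIG) atLeastAtMost_iff le_refl mult_nonneg_nonneg norm_ge_zero norm_zero)
  have "norm (PA z) = (\<Prod>i\<in>{1..N}. norm (qpoch (complex_of_real (a i) * z) q) / norm (qpoch (complex_of_real (b i) / z) q))"
    unfolding PA_def by (simp add: prod_norm[symmetric] norm_divide)
  also have "\<dots> \<le> (\<Prod>i\<in>{1..N}. U / L)"
  proof (rule prod_mono)
    fix i assume i: "i \<in> {1..N}"
    have "norm (complex_of_real (a i) * z) = a i * R"
      using a_pos[OF i] z by (simp add: norm_mult)
    also have "\<dots> \<le> a 1 * R" using a_le1[OF i] R0 by (simp add: mult_right_mono)
    finally have u: "norm (qpoch (complex_of_real (a i) * z) q) \<le> U" using X U by auto
    have "norm (complex_of_real (b i) / z) = b i / R"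
      using b_range[of i] i z by (simp add: norm_divide)
    also have "\<dots> \<le> Bm / R" using Bm(3)[OF i] R0 by (simp add: divide_right_mono)
    also have "\<dots> \<le> \<beta>" by (rule \<beta>)
    finally have l: "L \<le> norm (qpoch (complex_of_real (b i) / z) q)"
      unfolding L_def by (rule qpoch_lower[OF q _ \<beta>(2)])
    have L0: "0 < L" unfolding L_def by simp
    show "0 \<le> norm (qpoch (complex_of_real (a i) * z) q) / norm (qpoch (complex_of_real (b i) / z) q) \<and>
          norm (qpoch (complex_of_real (a i) * z) q) / norm (qpoch (complex_of_real (b i) / z) q) \<le> U / L"
      using u l L0 U0 by (auto intro: frac_le)
  qed
  also have "\<dots> = (U / L) ^ N" by simp
  finally show ?thesis unfolding L_def .
qed

lemma frac_aux: "0 \<le> (x::real) \<Longrightarrow> x / (1 + x) \<le> 1 \<and> x / (1 + x) \<le> x"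
  by (auto simp: divide_le_eq algebra_simps)

lemma fB_le1: "t > 0 \<Longrightarrow> fB q t k m \<le> 1"
  unfolding fB_def using q frac_aux[of "t * q powr (1/2 + real k + real_of_int m)"] by simp

lemma fB_le: "t > 0 \<Longrightarrow> fB q t k m \<le> t * q powr (1/2 + real k + real_of_int m)"
  unfolding fB_def using q frac_aux[of "t * q powr (1/2 + real k + real_of_int m)"] by simp

lemma dist_ge: "norm (complex_of_real c) - norm z \<le> norm (z - complex_of_real c)"
  using norm_triangle_ineq2[of "complex_of_real c" z] by (simp add: norm_minus_commute)

lemma dist_ge': "norm z - norm (complex_of_real c) \<le> norm (z - complex_of_real c)"
  using norm_triangle_ineq2[of z "complex_of_real c"] by simp

lemma A_neg:
  assumes r: "r > 0" and t: "t > 0" and b': "Bm < b'" "b' < 1"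
  shows "norm (Aker q N a b t k m r) \<le>
           (exp (1 / (1 - q)) / exp (- (Bm/b') / ((1 - Bm/b') * (1 - q)))) ^ N * b' powr (- real_of_int m)
            * q ^ uidx N r / (1 - a 1)"
proof -
  define c where "c = 1 / atil q N a r"
  define MM where "MM = (exp (1 / (1 - q)) / exp (- (Bm/b') / ((1 - Bm/b') * (1 - q)))) ^ N"
  have at: "0 < atil q N a r" "atil q N a r < 1" using atil_pos[OF r] atil_lt1[OF r] by auto
  have c0: "0 < c" unfolding c_def using at by simp
  have c1: "1 < c" unfolding c_def using at by (simp add: less_divide_eq)
  have a1: "0 < a 1" "a 1 < 1" using a_pos[of 1] a_lt1[of 1] N by auto
  have atle: "atil q N a r \<le> a 1 * q ^ uidx N r" by (rule atil_le[OF r])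
  have qu: "q ^ uidx N r \<le> 1" using q by (simp add: power_le_one)
  have atq: "atil q N a r \<le> q ^ uidx N r"
  proof -
    have "a 1 * q ^ uidx N r \<le> q ^ uidx N r"
      using a1 q by (intro mult_left_le_one_le) auto
    thus ?thesis using atle by linarith
  qed
  have ca: "1 \<le> c * a 1"
  proof -
    have "atil q N a r \<le> a 1" using atle qu a1 by (smt (verit) mult_left_le)
    thus ?thesis unfolding c_def using at by (simp add: le_divide_eq)
  qed
  have M: "norm (PA z) \<le> MM" if "norm z = b'" for z
    unfolding MM_def
  proof (rule PA_bound[OF b'(1) _ _ that])
    show "Bm / b' \<le> Bm / b'" "Bm / b' < 1" using b' Bm by (auto simp: divide_less_eq)
    show "a 1 * b' \<le> 1" using a1 b' Bm by (smt (verit) mult_less_cancel_left2)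
    show "norm (qpoch x q) \<le> exp (1 / (1 - q))" if "norm x \<le> 1" for x
      by (rule qpoch_upper[OF q that])
  qed
  have d: "c * (1 - a 1) \<le> norm (z - complex_of_real c)" if "norm z = b'" for z
    using dist_ge[of c z] that c0 ca b' by (simp add: algebra_simps)
  have "norm (Aker q N a b t k m r) \<le> fB q t k m * MM * b' powr (- real_of_int m) / (c * (1 - a 1))"
    using A_bound_gen[OF r b'(1) _ M _ _ t, of "c * (1 - a 1)"] d c0 c1 a1 b' unfolding c_def by auto
  also have "\<dots> \<le> 1 * MM * b' powr (- real_of_int m) / (c * (1 - a 1))"
    using fB_le1[OF t] a1 c0 unfolding MM_def
    by (intro divide_right_mono mult_right_mono) auto
  also have "\<dots> = MM * b' powr (- real_of_int m) * atil q N a r / (1 - a 1)"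
    unfolding c_def using at by simp
  also have "\<dots> \<le> MM * b' powr (- real_of_int m) * q ^ uidx N r / (1 - a 1)"
    using atq a1 unfolding MM_def
    by (intro divide_right_mono mult_left_mono) auto
  finally show ?thesis unfolding MM_def .
qed

end


context setting begin

lemma A_pos_raw:
  fixes m :: int and r k :: nat and t :: real
  assumes r: "r > 0" and t: "t > 0"
  defines "h \<equiv> q powr (1/2)"
  defines "p \<equiv> nat m div N + 1"
  defines "R \<equiv> h / (a 1 * h ^ (2*p))"
  defines "\<kappa> \<equiv> min (1 - q powr \<epsilon>) (1 - h)"
  shows "norm (Aker q N a b t k m r) \<le>
     fB q t k m * (exp (h / (1 - h^2)) ^ 2 / h ^ (p^2) / exp (- Bm / ((1 - Bm) * (1 - q)))) ^ N
       * R powr (- real_of_int m) * (q ^ uidx N r / \<kappa>)"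
proof -
  define u where "u = uidx N r"
  define j where "j = jidx N r"
  have j: "j \<in> {1..N}" unfolding j_def by (rule j_range[OF r])
  have h0: "0 < h" "h < 1" unfolding h_def using q powr_less_mono2[of "1/2" q 1] by auto
  have hsq: "h^2 = q" unfolding h_def using q by (simp add: powr_half_sqrt)
  define \<rho> where "\<rho> = q powr \<epsilon>"
  have \<rho>: "0 < \<rho>" "\<rho> < 1" unfolding \<rho>_def using q eps powr_less_mono2[of \<epsilon> q 1] by auto
  have \<kappa>: "0 < \<kappa>" "\<kappa> \<le> 1 - \<rho>" "\<kappa> \<le> 1 - h" unfolding \<kappa>_def \<rho>_def using \<rho> h0 by (auto simp: \<rho>_def)
  have a1: "0 < a 1" "a 1 < 1" using a_pos[of 1] a_lt1[of 1] N by auto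
  have aN: "0 < a N" using a_pos[of N] N by auto
  have ratio': "a 1 < a N * \<rho> / h"
  proof -
    have e: "-1/2 + \<epsilon> = \<epsilon> + (-(1/2))" by simp
    have "q powr (-1/2 + \<epsilon>) = q powr \<epsilon> * q powr (-(1/2))" by (simp only: e powr_add)
    also have "q powr (-(1/2)) = 1 / h" unfolding h_def by (rule powr_minus_divide)
    finally have "q powr (-1/2 + \<epsilon>) = \<rho> / h" unfolding \<rho>_def by simp
    thus ?thesis using ratio aN by (simp add: divide_less_eq mult.commute)
  qed
  have p1: "1 \<le> p" unfolding p_def by simp
  have hp: "h ^ (2*p) \<le> h" using power_decreasing[of 1 "2*p" h] h0 p1 by simp
  have R1: "1 < R"
  proof -
    have "a 1 * h ^ (2*p) < 1 * h ^ (2*p)" using a1 h0 by (intro mult_strict_right_mono) auto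
    hence "a 1 * h ^ (2*p) < h" using hp by linarith
    moreover have "0 < a 1 * h ^ (2*p)" using a1 h0 by simp
    ultimately show ?thesis unfolding R_def by (simp add: less_divide_eq)
  qed
  have R0: "0 < R" using R1 by simp
  have BmR: "Bm < R" using Bm R1 by linarith
  define MA where "MA = (exp (h / (1 - h^2)) ^ 2 / h ^ (p^2) / exp (- Bm / ((1 - Bm) * (1 - q)))) ^ N"
  have M: "norm (PA z) \<le> MA" if z: "norm z = R" for z
    unfolding MA_def
  proof (rule PA_bound[OF BmR _ _ z])
    show "a 1 * R \<le> h / h ^ (2*p)" unfolding R_def using a1 by simp
    show "norm (qpoch x q) \<le> exp (h / (1 - h^2)) ^ 2 / h ^ (p^2)" if "norm x \<le> h / h ^ (2*p)" for x
      using qpoch_upperA[OF h0 that] hsq by simp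
    show "Bm / R \<le> Bm" using Bm R1 by (simp add: divide_le_eq)
    show "Bm < 1" by (rule Bm)
  qed
  have at_eq: "atil q N a r = a j * h ^ (2*u)"
    unfolding atil_eq u_def j_def by (simp add: power_mult hsq)
  have at: "0 < atil q N a r" using atil_pos[OF r] .
  define c where "c = 1 / atil q N a r"
  have c0: "0 < c" unfolding c_def using at by simp
  have aj: "0 < a j" "a j \<le> a 1" "a N \<le> a j" using a_pos[OF j] a_le1[OF j] a_geN[OF j] by auto
  have fB0: "0 \<le> fB q t k m" by (rule fB_nonneg[OF t])
  have MA0: "0 \<le> MA" using M[of "complex_of_real R"] R0 norm_ge_zero[of "PA (complex_of_real R)"] by (simp del: norm_ge_zero)
  have Rm0: "0 \<le> R powr (- real_of_int m)" by simp
  show ?thesis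
  proof (cases "u + 1 \<le> p")
    case True
    have "a 1 * h ^ (2*p) \<le> a 1 * h ^ (2*u+2)"
      using True h0 a1 by (intro mult_left_mono power_decreasing) auto
    also have "\<dots> = a 1 * h * h ^ (2*u+1)" by (simp add: mult_ac)
    also have "\<dots> \<le> (a N * \<rho> / h) * h * h ^ (2*u+1)"
      using ratio' h0 by (intro mult_right_mono) auto
    also have "\<dots> = a N * \<rho> * h * h ^ (2*u)" using h0 by (simp add: field_simps)
    also have "\<dots> \<le> a j * \<rho> * h * h ^ (2*u)"
      using aj \<rho> h0 by (intro mult_right_mono) auto
    finally have "a 1 * h ^ (2*p) \<le> \<rho> * h * atil q N a r" unfolding at_eq by (simp add: mult_ac)
    hence cR: "c \<le> R * \<rho>"
      unfolding c_def R_def using at a1 h0 \<rho> by (simp add: field_simps)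
    have d: "R * (1 - \<rho>) \<le> norm (z - complex_of_real c)" if "norm z = R" for z
      using dist_ge'[of z c] that cR c0 by (simp add: algebra_simps)
    have Rc: "R \<noteq> 1 / atil q N a r" using cR \<rho> R0 unfolding c_def
      by (smt (verit) mult_less_cancel_left2)
    have "norm (Aker q N a b t k m r) \<le> fB q t k m * MA * R powr (- real_of_int m) / (R * (1 - \<rho>))"
      using A_bound_gen[OF r BmR Rc M _ _ t, of "R * (1 - \<rho>)"] d \<rho> R0 unfolding c_def by auto
    also have "\<dots> = fB q t k m * MA * R powr (- real_of_int m) * ((1 / R) / (1 - \<rho>))" by simp
    also have "\<dots> \<le> fB q t k m * MA * R powr (- real_of_int m) * (q ^ u / \<kappa>)"
    proof (intro mult_left_mono mult_nonneg_nonneg fB0 MA0 Rm0 frac_le)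
      have "1 / R = a 1 * h ^ (2*p) / h" unfolding R_def using h0 a1 by simp
      also have "\<dots> \<le> h ^ (2*p) / h" using a1 h0 by (intro divide_right_mono mult_left_le_one_le) auto
      also have "h ^ (2*p) / h = h ^ (2*p - 1)" using h0 p1 by (simp add: power_diff)
      also have "\<dots> \<le> h ^ (2*u)" using h0 True by (intro power_decreasing) auto
      also have "\<dots> = q ^ u" by (simp add: power_mult hsq)
      finally show "1 / R \<le> q ^ u" .
    qed (use \<kappa> \<rho> q in auto)
    finally show ?thesis unfolding MA_def u_def .
  next
    case False
    have "atil q N a r \<le> a 1 * h ^ (2*p)"
      unfolding at_eq using False aj h0 by (intro mult_mono power_decreasing) auto
    hence cR: "R \<le> h * c"
      unfolding c_def R_def using at a1 h0 by (simp add: field_simps)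
    have d: "c * (1 - h) \<le> norm (z - complex_of_real c)" if "norm z = R" for z
      using dist_ge[of c z] that cR c0 by (simp add: algebra_simps)
    have Rc: "R \<noteq> 1 / atil q N a r" using cR h0 c0 unfolding c_def
      by (smt (verit) mult_less_cancel_right2)
    have "norm (Aker q N a b t k m r) \<le> fB q t k m * MA * R powr (- real_of_int m) / (c * (1 - h))"
      using A_bound_gen[OF r BmR Rc M _ _ t, of "c * (1 - h)"] d h0 c0 unfolding c_def by auto
    also have "\<dots> = fB q t k m * MA * R powr (- real_of_int m) * (atil q N a r / (1 - h))"
      unfolding c_def by simp
    also have "\<dots> \<le> fB q t k m * MA * R powr (- real_of_int m) * (q ^ u / \<kappa>)"
    proof (intro mult_left_mono mult_nonneg_nonneg fB0 MA0 Rm0 frac_le)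
      have "atil q N a r \<le> a 1 * q ^ u" using atil_le[OF r] unfolding u_def .
      also have "\<dots> \<le> q ^ u" using a1 q by (intro mult_left_le_one_le) auto
      finally show "atil q N a r \<le> q ^ u" .
    qed (use \<kappa> h0 q in auto)
    finally show ?thesis unfolding MA_def u_def .
  qed
qed

end


context setting begin

lemma A_pos:
  fixes m :: int and r k :: nat and t :: real
  assumes r: "r > 0" and t: "t > 0" and m: "0 \<le> m"
  defines "h \<equiv> q powr (1/2)"
  defines "K0 \<equiv> exp (h / (1 - h^2)) ^ 2 / exp (- Bm / ((1 - Bm) * (1 - q)))"
  defines "\<kappa> \<equiv> min (1 - q powr \<epsilon>) (1 - h)"
  shows "norm (Aker q N a b t k m r) \<le>
     (t * K0 ^ N / \<kappa> * q powr (- real N / 2)) * a 1 powr (real_of_int m) *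
       q powr (real_of_int m ^ 2 / (2 * real N) + real_of_int m / 2 + real (uidx N r))"
proof -
  define p where "p = nat m div N + 1"
  define R where "R = h / (a 1 * h ^ (2*p))"
  define u where "u = uidx N r"
  have h0: "0 < h" "h < 1" unfolding h_def using q powr_less_mono2[of "1/2" q 1] by auto
  have hsq: "h^2 = q" unfolding h_def using q by (simp add: powr_half_sqrt)
  have hpow: "h ^ n = q powr (real n / 2)" for n
  proof -
    have "h ^ n = h powr real n" using h0 by (simp add: powr_realpow)
    also have "\<dots> = q powr (real n / 2)" unfolding h_def by (simp add: powr_powr)
    finally show ?thesis .
  qed
  have a1: "0 < a 1" "a 1 < 1" using a_pos[of 1] a_lt1[of 1] N by auto
  have \<kappa>0: "0 < \<kappa>" unfolding \<kappa>_def using h0 q eps powr_less_mono2[of \<epsilon> q 1] by auto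
  have L0: "0 < exp (- Bm / ((1 - Bm) * (1 - q)))" by simp
  have K00: "0 \<le> K0" unfolding K0_def by simp
  have raw: "norm (Aker q N a b t k m r) \<le>
     fB q t k m * (exp (h / (1 - h^2)) ^ 2 / h ^ (p^2) / exp (- Bm / ((1 - Bm) * (1 - q)))) ^ N
       * R powr (- real_of_int m) * (q ^ u / \<kappa>)"
    using A_pos_raw[OF r t, where m=m and k=k] unfolding h_def p_def R_def \<kappa>_def u_def by simp
  have e1: "(exp (h / (1 - h^2)) ^ 2 / h ^ (p^2) / exp (- Bm / ((1 - Bm) * (1 - q)))) ^ N
           = K0 ^ N * q powr (- (real N * real p ^ 2 / 2))"
  proof -
    have "(exp (h / (1 - h^2)) ^ 2 / h ^ (p^2) / exp (- Bm / ((1 - Bm) * (1 - q)))) ^ N = (K0 / h ^ (p^2)) ^ N"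
      unfolding K0_def by (simp only: divide_divide_eq_left mult.commute)
    also have "\<dots> = K0 ^ N / (q powr (real (p^2) / 2)) ^ N" by (simp only: power_divide hpow)
    also have "(q powr (real (p^2) / 2)) ^ N = q powr (real N * real p ^ 2 / 2)"
      using q by (simp add: powr_power)
    also have "K0 ^ N / q powr (real N * real p ^ 2 / 2) = K0 ^ N * q powr (- (real N * real p ^ 2 / 2))"
      by (simp only: powr_minus divide_inverse)
    finally show ?thesis .
  qed
  have e2: "R powr (- real_of_int m) = a 1 powr real_of_int m * q powr ((real p - 1/2) * real_of_int m)"
  proof -
    have "h ^ (2*p) = q powr real p" using hpow[of "2*p"] by simp
    hence "R = 1 / (a 1 * (q powr real p / h))" unfolding R_def using h0 a1 by (simp add: field_simps)
    also have "q powr real p / h = q powr (real p - 1/2)" unfolding h_def by (simp add: powr_diff)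
    finally have "R = 1 / (a 1 * q powr (real p - 1/2))" .
    hence "R powr (- real_of_int m) = (a 1 * q powr (real p - 1/2)) powr real_of_int m"
      using a1 q by (simp add: powr_divide powr_minus_divide)
    also have "\<dots> = a 1 powr real_of_int m * q powr ((real p - 1/2) * real_of_int m)"
      using a1 q by (simp add: powr_mult powr_powr)
    finally show ?thesis .
  qed
  have fBle: "fB q t k m \<le> t * q powr (real_of_int m)"
  proof -
    have "fB q t k m \<le> t * q powr (1/2 + real k + real_of_int m)" by (rule fB_le[OF t])
    also have "\<dots> \<le> t * q powr (real_of_int m)"
      using t q by (intro mult_left_mono powr_mono') auto
    finally show ?thesis .
  qed
  have qu: "q ^ u = q powr real u" using q by (simp add: powr_realpow)
  define E where "E = real_of_int m + (- (real N * real p ^ 2 / 2)) + (real p - 1/2) * real_of_int m + real u"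
  have qE: "q powr E = q powr (real_of_int m) * q powr (- (real N * real p ^ 2 / 2)) * q powr ((real p - 1/2) * real_of_int m) * q powr (real u)"
    unfolding E_def by (simp only: powr_add)
  have "norm (Aker q N a b t k m r) \<le> (t * q powr (real_of_int m)) * (K0 ^ N * q powr (- (real N * real p ^ 2 / 2)))
       * (a 1 powr real_of_int m * q powr ((real p - 1/2) * real_of_int m)) * (q powr real u / \<kappa>)"
    using raw unfolding e1 e2 qu
    by (rule order_trans) (intro mult_right_mono fBle; use \<kappa>0 K00 q in simp)
  also have "\<dots> = (t * K0 ^ N / \<kappa>) * a 1 powr real_of_int m * q powr E"
    unfolding qE using \<kappa>0 by (simp add: field_simps)
  also have "\<dots> \<le> (t * K0 ^ N / \<kappa>) * a 1 powr real_of_int m *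
       (q powr (- real N / 2) * q powr (real_of_int m ^ 2 / (2 * real N) + real_of_int m / 2 + real u))"
  proof -
    have Npm: "0 \<le> real N * real p - real_of_int m" "real N * real p - real_of_int m \<le> real N"
    proof -
      define mn where "mn = nat m"
      have mm: "real_of_int m = real mn" unfolding mn_def using m by simp
      have dm: "N * (mn div N) + mn mod N = mn" by (rule mult_div_mod_eq)
      have lt: "mn mod N < N" using N by simp
      have Np: "N * p = N * (mn div N) + N" unfolding p_def mn_def[symmetric] by simp
      have "N * p = mn + (N - mn mod N)" using dm lt Np by arith
      moreover have "N - mn mod N \<le> N" by simp
      ultimately have "N * p = mn + (N - mn mod N)" "N - mn mod N \<le> N" by auto
      hence "real N * real p = real mn + real (N - mn mod N)" "real (N - mn mod N) \<le> real N"
        by (metis of_nat_add of_nat_mult, simp)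
      thus "0 \<le> real N * real p - real_of_int m" "real N * real p - real_of_int m \<le> real N"
        unfolding mm by auto
    qed
    have sq: "(real N * real p - real_of_int m)^2 \<le> real N ^ 2"
      using Npm by (intro power_mono) auto
    have N0: "0 < real N" using N by simp
    have "(E - (- real N / 2 + (real_of_int m ^ 2 / (2 * real N) + real_of_int m / 2 + real u))) * (2 * real N)
          = real N ^ 2 - (real N * real p - real_of_int m)^2"
      unfolding E_def using N0 by (simp add: field_simps power2_eq_square)
    hence "0 \<le> (E - (- real N / 2 + (real_of_int m ^ 2 / (2 * real N) + real_of_int m / 2 + real u))) * (2 * real N)"
      using sq by simp
    hence "- real N / 2 + (real_of_int m ^ 2 / (2 * real N) + real_of_int m / 2 + real u) \<le> E"
      using N0 by (simp add: zero_le_mult_iff)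
    hence "q powr E \<le> q powr (- real N / 2 + (real_of_int m ^ 2 / (2 * real N) + real_of_int m / 2 + real u))"
      using q by (intro powr_mono') auto
    also have "q powr (- real N / 2 + (real_of_int m ^ 2 / (2 * real N) + real_of_int m / 2 + real u))
       = q powr (- real N / 2) * q powr (real_of_int m ^ 2 / (2 * real N) + real_of_int m / 2 + real u)"
      by (rule powr_add)
    finally have "q powr E \<le> q powr (- real N / 2) * q powr (real_of_int m ^ 2 / (2 * real N) + real_of_int m / 2 + real u)" .
    moreover have "0 \<le> (t * K0 ^ N / \<kappa>) * a 1 powr real_of_int m" using t \<kappa>0 K00 by simp
    ultimately show ?thesis by (intro mult_left_mono)
  qed
  finally show ?thesis unfolding u_def by (simp add: mult_ac)
qed

end


lemma prod_lower_exp_inj: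
  fixes \<gamma> q :: real and A :: "'b set" and g :: "'b \<Rightarrow> nat"
  assumes "0 \<le> \<gamma>" "\<gamma> < 1" "0 < q" "q < 1" "finite A" "inj_on g A"
  shows "exp (- \<gamma> / ((1 - \<gamma>) * (1 - q))) \<le> (\<Prod>l\<in>A. 1 - \<gamma> * q ^ g l)"
proof -
  have "(\<Prod>l\<in>A. 1 - \<gamma> * q ^ g l) = (\<Prod>k\<in>g ` A. 1 - \<gamma> * q ^ k)"
    using prod.reindex[OF assms(6), of "\<lambda>k. 1 - \<gamma> * q ^ k"] by simp
  moreover have "exp (- \<gamma> / ((1 - \<gamma>) * (1 - q))) \<le> (\<Prod>k\<in>g ` A. 1 - \<gamma> * q ^ k)"
    using assms by (intro prod_lower_exp) auto
  ultimately show ?thesis by simp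
qed

locale Bsetting = setting +
  fixes r :: nat and \<delta>1 :: real
  assumes r: "r > 0" and \<delta>1: "0 < \<delta>1" "\<delta>1 \<le> 1"
    and \<delta>1_sep: "\<And>i i'. i \<in> {1..N} \<Longrightarrow> i' \<in> {1..N} \<Longrightarrow> i \<noteq> i' \<Longrightarrow> \<delta>1 \<le> \<bar>a i - a i'\<bar>"
begin

definition "hh = q powr (1/2)"
definition "uu = uidx N r"
definition "jj = jidx N r"
definition "cc = 1 / atil q N a r"
definition "\<delta> = min ((1 - hh) / 2) (hh * \<delta>1 / 2)"
definition "\<Gamma> = (1 + hh) / 2"
definition "xx i l = a i * cc * q ^ l"

lemma hh: "0 < hh" "hh < 1" "hh^2 = q"
  unfolding hh_def using q powr_less_mono2[of "1/2" q 1] by (auto simp: powr_half_sqrt)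

lemma jj: "jj \<in> {1..N}" unfolding jj_def by (rule j_range[OF r])

lemma ajj: "0 < a jj" "a jj < 1" using a_pos[OF jj] a_lt1[OF jj] by auto

lemma cc_eq: "cc = 1 / (a jj * q ^ uu)"
  unfolding cc_def atil_eq jj_def uu_def ..

lemma cc1: "1 < cc" using atil_pos[OF r] atil_lt1[OF r] unfolding cc_def by (simp add: less_divide_eq)

lemma ratio_h: "i \<in> {1..N} \<Longrightarrow> i' \<in> {1..N} \<Longrightarrow> a i / a i' < 1 / hh"
proof -
  assume i: "i \<in> {1..N}" and i': "i' \<in> {1..N}"
  have aN: "0 < a N" using a_pos[of N] N by auto
  have "a i / a i' \<le> a 1 / a N"
    using a_le1[OF i] a_geN[OF i'] a_pos[OF i] a_pos[OF i'] aN by (intro frac_le) auto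
  also have "\<dots> < q powr (-1/2 + \<epsilon>)" by (rule ratio)
  also have "\<dots> \<le> q powr (-(1/2))" using q eps by (intro powr_mono') auto
  also have "\<dots> = 1 / hh" unfolding hh_def by (rule powr_minus_divide)
  finally show ?thesis .
qed

lemma \<delta>: "0 < \<delta>" "\<delta> \<le> (1 - hh) / 2" "\<delta> \<le> hh * \<delta>1 / 2"
  unfolding \<delta>_def using hh \<delta>1 by (auto simp: min_def)

lemma \<Gamma>: "0 < \<Gamma>" "\<Gamma> < 1" unfolding \<Gamma>_def using hh by auto

lemma xx_pos: "i \<in> {1..N} \<Longrightarrow> 0 < xx i l"
  unfolding xx_def using a_pos cc1 q by auto

lemma xx_lt: assumes i: "i \<in> {1..N}" and l: "l < uu"
  shows "1 / xx i l \<le> hh * q ^ (uu - l - 1)"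
proof -
  have "1 / xx i l = (a jj / a i) * q ^ (uu - l)"
    unfolding xx_def cc_eq using a_pos[OF i] ajj q l by (simp add: field_simps power_diff)
  also have "\<dots> \<le> (1 / hh) * q ^ (uu - l)"
    using ratio_h[OF jj i] q by (intro mult_right_mono) auto
  also have "q ^ (uu - l) = hh^2 * q ^ (uu - l - 1)"
    using l hh by (simp add: power_Suc[symmetric] Suc_diff_Suc)
  also have "(1 / hh) * (hh^2 * q ^ (uu - l - 1)) = hh * q ^ (uu - l - 1)"
    using hh(1) by (simp add: power2_eq_square)
  finally show ?thesis .
qed

lemma xx_gt: assumes i: "i \<in> {1..N}" and l: "uu < l"
  shows "xx i l \<le> hh * q ^ (l - uu - 1)"
proof -
  have "xx i l = (a i / a jj) * q ^ (l - uu)"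
    unfolding xx_def cc_eq using a_pos[OF i] ajj q l by (simp add: field_simps power_diff)
  also have "\<dots> \<le> (1 / hh) * q ^ (l - uu)"
    using ratio_h[OF i jj] q by (intro mult_right_mono) auto
  also have "q ^ (l - uu) = hh^2 * q ^ (l - uu - 1)"
    using l hh by (simp add: power_Suc[symmetric] Suc_diff_Suc)
  also have "(1 / hh) * (hh^2 * q ^ (l - uu - 1)) = hh * q ^ (l - uu - 1)"
    using hh(1) by (simp add: power2_eq_square)
  finally show ?thesis .
qed

lemma xx_eq: "i \<in> {1..N} \<Longrightarrow> xx i uu = a i / a jj"
  unfolding xx_def cc_eq using ajj q by (simp add: field_simps)

lemma factor_eq: "1 - complex_of_real (a i) * (complex_of_real cc * (1 + \<zeta>)) * complex_of_real (q ^ l)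
    = 1 - complex_of_real (xx i l) * (1 + \<zeta>)"
  unfolding xx_def by (simp add: mult_ac)

lemma factor_lt:
  assumes i: "i \<in> {1..N}" and l: "l < uu" and z: "norm \<zeta> \<le> \<delta>"
  shows "xx i l * (1 - norm \<zeta>) * (1 - \<Gamma> * q ^ (uu - 1 - l))
     \<le> norm (1 - complex_of_real (xx i l) * (1 + \<zeta>))"
proof -
  define x where "x = xx i l"
  have x0: "0 < x" unfolding x_def by (rule xx_pos[OF i])
  have ix: "1 / x \<le> hh * q ^ (uu - l - 1)" unfolding x_def by (rule xx_lt[OF i l])
  have z1: "1 - norm \<zeta> \<ge> (1 + hh) / 2" using order_trans[OF z \<delta>(2)] by (simp add: field_simps)
  have hp: "0 < (1 + hh) / 2" using hh by simp
  have kk: "uu - l - 1 = uu - 1 - l" by simp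
  have G: "hh / ((1 + hh) / 2) \<le> \<Gamma>"
  proof -
    have "(1 + hh)^2 - 4 * hh = (1 - hh)^2" by (simp add: power2_eq_square algebra_simps)
    hence "2 * hh \<le> (1 + hh) / 2 * (1 + hh)" using zero_le_power2[of "1 - hh"]
      by (simp add: power2_eq_square algebra_simps)
    hence "2 * hh / (1 + hh) \<le> (1 + hh) / 2" using hh by (simp add: pos_divide_le_eq)
    moreover have "hh / ((1 + hh) / 2) = 2 * hh / (1 + hh)" by simp
    ultimately show ?thesis unfolding \<Gamma>_def by simp
  qed
  have "1 / (x * (1 - norm \<zeta>)) = (1 / x) * (1 / (1 - norm \<zeta>))" by simp
  also have "\<dots> \<le> (hh * q ^ (uu - 1 - l)) * (1 / ((1 + hh) / 2))"
  proof (rule mult_mono)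
    show "1 / x \<le> hh * q ^ (uu - 1 - l)" using ix kk by simp
    show "1 / (1 - norm \<zeta>) \<le> 1 / ((1 + hh) / 2)" by (rule frac_le) (use z1 hp in auto)
  qed (use hh q z1 hp in auto)
  also have "\<dots> = (hh / ((1 + hh) / 2)) * q ^ (uu - 1 - l)" by simp
  also have "\<dots> \<le> \<Gamma> * q ^ (uu - 1 - l)" using G q by (intro mult_right_mono) auto
  finally have key: "1 / (x * (1 - norm \<zeta>)) \<le> \<Gamma> * q ^ (uu - 1 - l)" .
  have xz: "0 < x * (1 - norm \<zeta>)" using x0 z1 hp by simp
  have "x * (1 - norm \<zeta>) * (1 - \<Gamma> * q ^ (uu - 1 - l)) = x * (1 - norm \<zeta>) - x * (1 - norm \<zeta>) * (\<Gamma> * q ^ (uu - 1 - l))"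
    by (simp add: algebra_simps)
  also have "\<dots> \<le> x * (1 - norm \<zeta>) - 1"
  proof -
    have "1 \<le> x * (1 - norm \<zeta>) * (\<Gamma> * q ^ (uu - 1 - l))"
      using key xz by (simp add: divide_le_eq mult.commute)
    thus ?thesis by linarith
  qed
  also have "x * (1 - norm \<zeta>) \<le> x * norm (1 + \<zeta>)"
    using x0 norm_triangle_ineq2[of 1 "-\<zeta>"] by (intro mult_left_mono) auto
  hence "x * (1 - norm \<zeta>) - 1 \<le> norm (complex_of_real x * (1 + \<zeta>)) - norm (1::complex)"
    using x0 by (simp add: norm_mult)
  also have "\<dots> \<le> norm (1 - complex_of_real x * (1 + \<zeta>))"
    using norm_triangle_ineq2[of "complex_of_real x * (1 + \<zeta>)" 1] by (simp add: norm_minus_commute)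
  finally show ?thesis unfolding x_def .
qed

end


context Bsetting begin

lemma norm_1_minus_ge: "1 - x * (1 + norm \<zeta>) \<le> norm (1 - complex_of_real x * (1 + \<zeta>))" if "0 \<le> x" for x :: real
proof -
  have "norm (complex_of_real x * (1 + \<zeta>)) \<le> x * (1 + norm \<zeta>)"
    using that norm_triangle_ineq[of 1 \<zeta>] by (simp add: norm_mult mult_left_mono)
  moreover have "norm (1::complex) - norm (complex_of_real x * (1 + \<zeta>)) \<le> norm (1 - complex_of_real x * (1 + \<zeta>))"
    by (rule norm_triangle_ineq2)
  ultimately show ?thesis by simp
qed

lemma norm_x_minus_ge: "x * (1 - norm \<zeta>) - 1 \<le> norm (1 - complex_of_real x * (1 + \<zeta>))" if "0 \<le> x" for x :: real
proof -
  have "x * (1 - norm \<zeta>) \<le> x * norm (1 + \<zeta>)"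
    using that norm_triangle_ineq2[of 1 "-\<zeta>"] by (intro mult_left_mono) auto
  hence "x * (1 - norm \<zeta>) - 1 \<le> norm (complex_of_real x * (1 + \<zeta>)) - norm (1::complex)"
    using that by (simp add: norm_mult)
  also have "\<dots> \<le> norm (1 - complex_of_real x * (1 + \<zeta>))"
    using norm_triangle_ineq2[of "complex_of_real x * (1 + \<zeta>)" 1] by (simp add: norm_minus_commute)
  finally show ?thesis .
qed

lemma hh_G: "hh * (1 + (1 - hh) / 2) \<le> \<Gamma>"
proof -
  have "(1 + hh) / 2 - hh * (1 + (1 - hh) / 2) = (1 - hh)^2 / 2"
    by (simp add: power2_eq_square field_simps)
  thus ?thesis unfolding \<Gamma>_def using zero_le_power2[of "1 - hh"] by linarith
qed

lemma factor_gt: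
  assumes i: "i \<in> {1..N}" and l: "uu < l" and z: "norm \<zeta> \<le> \<delta>"
  shows "1 - \<Gamma> * q ^ (l - uu - 1) \<le> norm (1 - complex_of_real (xx i l) * (1 + \<zeta>))"
proof -
  have x0: "0 \<le> xx i l" using less_imp_le[OF xx_pos[OF i]] .
  have "xx i l * (1 + norm \<zeta>) \<le> (hh * q ^ (l - uu - 1)) * (1 + (1 - hh) / 2)"
    using xx_gt[OF i l] z \<delta> x0 by (intro mult_mono) auto
  also have "\<dots> = (hh * (1 + (1 - hh) / 2)) * q ^ (l - uu - 1)" by simp
  also have "\<dots> \<le> \<Gamma> * q ^ (l - uu - 1)" using hh_G q by (intro mult_right_mono) auto
  finally show ?thesis using norm_1_minus_ge[OF x0, of \<zeta>] by linarith
qed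

lemma factor_jj: "norm (1 - complex_of_real (xx jj uu) * (1 + \<zeta>)) = norm \<zeta>"
  using xx_eq[OF jj] ajj by simp

lemma absdiff:
  assumes i: "i \<in> {1..N}" and ij: "i \<noteq> jj"
  shows "\<delta>1 \<le> \<bar>1 - a i / a jj\<bar>"
proof -
  have "\<bar>1 - a i / a jj\<bar> = \<bar>a jj - a i\<bar> / a jj" using ajj by (simp add: field_simps abs_div)
  also have "\<dots> \<ge> \<bar>a jj - a i\<bar>" using ajj by (simp add: le_divide_eq mult_left_le)
  finally show ?thesis using \<delta>1_sep[OF jj i] ij by auto
qed

lemma factor_ne_lb:
  assumes i: "i \<in> {1..N}" and ij: "i \<noteq> jj"
  shows "\<delta>1 - norm \<zeta> / hh \<le> norm (1 - complex_of_real (xx i uu) * (1 + \<zeta>))"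
proof -
  define x where "x = a i / a jj"
  have x0: "0 < x" unfolding x_def using a_pos[OF i] ajj by simp
  have xh: "x < 1 / hh" unfolding x_def by (rule ratio_h[OF i jj])
  have eq: "1 - complex_of_real x * (1 + \<zeta>) = complex_of_real (1 - x) - complex_of_real x * \<zeta>"
    by (simp add: algebra_simps)
  have "norm (complex_of_real (1 - x)) - norm (complex_of_real x * \<zeta>) \<le> norm (1 - complex_of_real x * (1 + \<zeta>))"
    unfolding eq by (rule norm_triangle_ineq2)
  moreover have "norm (complex_of_real x * \<zeta>) \<le> norm \<zeta> / hh"
  proof -
    have "x * norm \<zeta> \<le> (1 / hh) * norm \<zeta>" using xh by (intro mult_right_mono) auto
    thus ?thesis using x0 by (simp add: norm_mult)
  qed
  moreover have "\<delta>1 \<le> norm (complex_of_real (1 - x))" using absdiff[OF i ij] unfolding x_def by (simp only: norm_of_real)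
  ultimately show ?thesis unfolding xx_eq[OF i] x_def by linarith
qed

lemma factor_nz:
  assumes i: "i \<in> {1..N}" and z: "norm \<zeta> < 2 * \<delta>" "\<zeta> \<noteq> 0"
  shows "1 - complex_of_real (xx i l) * (1 + \<zeta>) \<noteq> 0"
proof -
  have x0: "0 < xx i l" by (rule xx_pos[OF i])
  have d2: "2 * \<delta> \<le> 1 - hh" "2 * \<delta> \<le> hh * \<delta>1" using \<delta> by auto
  consider "l < uu" | "uu < l" | "l = uu" "i = jj" | "l = uu" "i \<noteq> jj" by linarith
  thus ?thesis
  proof cases
    case 1
    have "1 / xx i l \<le> hh * q ^ (uu - l - 1)" by (rule xx_lt[OF i 1])
    also have "\<dots> \<le> hh" using hh q by (simp add: mult_left_le power_le_one)
    finally have "1 \<le> xx i l * hh" using x0 by (simp add: divide_le_eq mult.commute)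
    also have "xx i l * hh < xx i l * (1 - norm \<zeta>)" using x0 z d2 by (intro mult_strict_left_mono) auto
    finally have "0 < xx i l * (1 - norm \<zeta>) - 1" by simp
    thus ?thesis using norm_x_minus_ge[of "xx i l" \<zeta>] x0 by auto
  next
    case 2
    have "xx i l \<le> hh * q ^ (l - uu - 1)" by (rule xx_gt[OF i 2])
    also have "\<dots> \<le> hh" using hh q by (simp add: mult_left_le power_le_one)
    finally have "xx i l * (1 + norm \<zeta>) \<le> hh * (1 + norm \<zeta>)" by (intro mult_right_mono) auto
    also have "\<dots> < hh * (2 - hh)" using hh z d2 by (intro mult_strict_left_mono) auto
    also have "\<dots> \<le> 1" using zero_le_power2[of "1 - hh"] by (simp add: power2_eq_square algebra_simps)
    finally have "0 < 1 - xx i l * (1 + norm \<zeta>)" by simp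
    thus ?thesis using norm_1_minus_ge[of "xx i l" \<zeta>] x0 by auto
  next
    case 3
    thus ?thesis using factor_jj[of \<zeta>] z by auto
  next
    case 4
    have "norm \<zeta> / hh < \<delta>1" using z d2 hh by (simp add: divide_less_eq mult.commute)
    thus ?thesis using factor_ne_lb[OF i 4(2), of \<zeta>] 4(1) by auto
  qed
qed

end


context Bsetting begin

definition "LG = exp (- \<Gamma> / ((1 - \<Gamma>) * (1 - q)))"

lemma LG: "0 < LG" unfolding LG_def by simp

lemma GQ: "0 \<le> 1 - \<Gamma> * q ^ k"
proof -
  have "\<Gamma> * q ^ k \<le> 1" using \<Gamma> q by (intro mult_le_one) (auto simp: power_le_one)
  thus ?thesis by simp
qed

lemma prod_split3:
  fixes f :: "nat \<Rightarrow> real"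
  assumes "u < n"
  shows "(\<Prod>l<n. f l) = (\<Prod>l<u. f l) * f u * (\<Prod>l\<in>{u<..<n}. f l)"
proof -
  have "{..<n} = {..<u} \<union> ({u} \<union> {u<..<n})" using assms by auto
  hence "(\<Prod>l<n. f l) = (\<Prod>l\<in>{..<u} \<union> ({u} \<union> {u<..<n}). f l)" by simp
  also have "\<dots> = (\<Prod>l<u. f l) * (\<Prod>l\<in>{u} \<union> {u<..<n}. f l)"
    by (rule prod.union_disjoint) auto
  also have "(\<Prod>l\<in>{u} \<union> {u<..<n}. f l) = f u * (\<Prod>l\<in>{u<..<n}. f l)"
    by (subst prod.union_disjoint) auto
  finally show ?thesis by (simp add: mult_ac)
qed

lemma qpoch_a_lower:
  assumes i: "i \<in> {1..N}" and z: "norm \<zeta> \<le> \<delta>" and half: "1/2 \<le> (1 - norm \<zeta>) ^ uu"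
  shows "(1/2) * LG^2 * (if i = jj then norm \<zeta> else \<delta>1 / 2) * (\<Prod>l<uu. xx i l)
         \<le> norm (qpoch (complex_of_real (a i) * (complex_of_real cc * (1 + \<zeta>))) q)"
proof (rule qpoch_norm_ge[OF q, of "Suc uu"])
  fix n assume n: "Suc uu \<le> n"
  define f where "f l = norm (1 - complex_of_real (xx i l) * (1 + \<zeta>))" for l
  have "norm (\<Prod>l<n. 1 - complex_of_real (a i) * (complex_of_real cc * (1 + \<zeta>)) * complex_of_real (q ^ l))
        = (\<Prod>l<n. f l)"
    unfolding f_def by (simp add: prod_norm[symmetric] factor_eq del: of_real_power)
  also have "\<dots> = (\<Prod>l<uu. f l) * f uu * (\<Prod>l\<in>{uu<..<n}. f l)"
    using n by (intro prod_split3) auto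
  finally have eq: "norm (\<Prod>l<n. 1 - complex_of_real (a i) * (complex_of_real cc * (1 + \<zeta>)) * complex_of_real (q ^ l))
        = (\<Prod>l<uu. f l) * f uu * (\<Prod>l\<in>{uu<..<n}. f l)" .
  have z1: "norm \<zeta> \<le> 1" using order_trans[OF z \<delta>(2)] hh by (simp add: field_simps)
  have P1: "(1/2) * (\<Prod>l<uu. xx i l) * LG \<le> (\<Prod>l<uu. f l)"
  proof -
    have PM: "(\<Prod>l<uu. xx i l * (1 - norm \<zeta>) * (1 - \<Gamma> * q ^ (uu - 1 - l))) \<le> (\<Prod>l<uu. f l)"
    proof (rule prod_mono)
      fix l assume l: "l \<in> {..<uu}"
      have "0 \<le> 1 - \<Gamma> * q ^ (uu - 1 - l)" by (rule GQ)
      hence "0 \<le> xx i l * (1 - norm \<zeta>) * (1 - \<Gamma> * q ^ (uu - 1 - l))"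
        using xx_pos[OF i, of l] z1 by simp
      thus "0 \<le> xx i l * (1 - norm \<zeta>) * (1 - \<Gamma> * q ^ (uu - 1 - l)) \<and>
            xx i l * (1 - norm \<zeta>) * (1 - \<Gamma> * q ^ (uu - 1 - l)) \<le> f l"
        unfolding f_def using factor_lt[OF i _ z, of l] l by auto
    qed
    have LGP: "LG \<le> (\<Prod>l<uu. 1 - \<Gamma> * q ^ (uu - 1 - l))"
      unfolding LG_def using \<Gamma> q by (intro prod_lower_exp_inj) (auto simp: inj_on_def)
    have X0: "0 \<le> (\<Prod>l<uu. xx i l)" by (intro prod_nonneg) (use xx_pos[OF i] in \<open>auto intro: less_imp_le\<close>)
    have "(1/2) * (\<Prod>l<uu. xx i l) * LG = (\<Prod>l<uu. xx i l) * (1/2) * LG" by simp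
    also have "\<dots> \<le> (\<Prod>l<uu. xx i l) * (1 - norm \<zeta>) ^ uu * (\<Prod>l<uu. 1 - \<Gamma> * q ^ (uu - 1 - l))"
      using half LGP X0 LG by (intro mult_mono mult_left_mono) auto
    also have "\<dots> = (\<Prod>l<uu. xx i l * (1 - norm \<zeta>) * (1 - \<Gamma> * q ^ (uu - 1 - l)))"
      by (simp add: prod.distrib)
    also note PM
    finally show ?thesis .
  qed
  have P2: "LG \<le> (\<Prod>l\<in>{uu<..<n}. f l)"
  proof -
    have "LG \<le> (\<Prod>l\<in>{uu<..<n}. 1 - \<Gamma> * q ^ (l - uu - 1))"
      unfolding LG_def using \<Gamma> q by (intro prod_lower_exp_inj) (auto simp: inj_on_def)
    also have "\<dots> \<le> (\<Prod>l\<in>{uu<..<n}. f l)"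
    proof (rule prod_mono)
      fix l assume l: "l \<in> {uu<..<n}"
      have "0 \<le> 1 - \<Gamma> * q ^ (l - uu - 1)" by (rule GQ)
      thus "0 \<le> 1 - \<Gamma> * q ^ (l - uu - 1) \<and> 1 - \<Gamma> * q ^ (l - uu - 1) \<le> f l"
        unfolding f_def using factor_gt[OF i _ z, of l] l by auto
    qed
    finally show ?thesis .
  qed
  have P3: "(if i = jj then norm \<zeta> else \<delta>1 / 2) \<le> f uu"
  proof (cases "i = jj")
    case True thus ?thesis unfolding f_def using factor_jj by simp
  next
    case False
    have "norm \<zeta> / hh \<le> \<delta>1 / 2" using z \<delta> hh by (simp add: divide_le_eq mult.commute)
    thus ?thesis unfolding f_def using factor_ne_lb[OF i False, of \<zeta>] False by simp
  qed
  have F0: "0 \<le> (if i = jj then norm \<zeta> else \<delta>1 / 2)" using \<delta>1 by simp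
  have X0: "0 \<le> (\<Prod>l<uu. xx i l)" by (intro prod_nonneg) (use xx_pos[OF i] in \<open>auto intro: less_imp_le\<close>)
  have "(1/2) * LG^2 * (if i = jj then norm \<zeta> else \<delta>1 / 2) * (\<Prod>l<uu. xx i l)
        = ((1/2) * (\<Prod>l<uu. xx i l) * LG) * (if i = jj then norm \<zeta> else \<delta>1 / 2) * LG"
    by (simp add: power2_eq_square mult_ac)
  also have "\<dots> \<le> (\<Prod>l<uu. f l) * f uu * (\<Prod>l\<in>{uu<..<n}. f l)"
  proof -
    have f0: "0 \<le> f l" for l unfolding f_def by simp
    have pf0: "0 \<le> (\<Prod>l<uu. f l)" by (intro prod_nonneg) (use f0 in auto)
    show ?thesis using P1 P2 P3 F0 X0 LG pf0 f0[of uu] by (intro mult_mono) auto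
  qed
  finally show "(1/2) * LG^2 * (if i = jj then norm \<zeta> else \<delta>1 / 2) * (\<Prod>l<uu. xx i l)
        \<le> norm (\<Prod>l<n. 1 - complex_of_real (a i) * (complex_of_real cc * (1 + \<zeta>)) * complex_of_real (q ^ l))"
    unfolding eq .
qed

end


context Bsetting begin

definition QB :: "complex \<Rightarrow> complex" where
  "QB w = (\<Prod>i\<in>{1..N}. qpoch (complex_of_real (b i) / w) q / qpoch (complex_of_real (a i) * w) q)"

definition "SB = ball (complex_of_real cc) (2 * \<delta> * cc)"

lemma cc0: "0 < cc" using cc1 by simp

lemma \<delta>_le: "2 * \<delta> \<le> 1 - hh" "\<delta> \<le> 1/2" "2 * \<delta> < 1"
  using \<delta>(2) hh(1) by (simp_all add: field_simps)

lemma SB_zeta: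
  assumes w: "w \<in> SB"
  defines "\<zeta> \<equiv> w / complex_of_real cc - 1"
  shows "w = complex_of_real cc * (1 + \<zeta>)" "norm \<zeta> < 2 * \<delta>" "w \<noteq> complex_of_real cc \<Longrightarrow> \<zeta> \<noteq> 0"
    "w \<noteq> 0"
proof -
  show e: "w = complex_of_real cc * (1 + \<zeta>)" unfolding \<zeta>_def using cc0 by (simp add: field_simps)
  have "norm \<zeta> = norm (w - complex_of_real cc) / cc"
    unfolding \<zeta>_def using cc0 by (simp add: field_simps norm_divide)
  also have "\<dots> < 2 * \<delta>" using w cc0 unfolding SB_def by (simp add: dist_norm norm_minus_commute divide_less_eq)
  finally show n: "norm \<zeta> < 2 * \<delta>" .
  show "w \<noteq> complex_of_real cc \<Longrightarrow> \<zeta> \<noteq> 0" unfolding \<zeta>_def using cc0 by auto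
  have "norm \<zeta> < 1" using order_less_trans[OF n \<delta>_le(3)] .
  hence "1 + \<zeta> \<noteq> 0" by (metis add.inverse_unique norm_minus_cancel norm_one less_irrefl)
  thus "w \<noteq> 0" using e cc0 by simp
qed

lemma QB_holo: "QB holomorphic_on (SB - {complex_of_real cc})"
  unfolding QB_def
proof (intro holomorphic_on_prod holomorphic_on_divide)
  fix i assume i: "i \<in> {1..N}"
  show "(\<lambda>w. qpoch (complex_of_real (b i) / w) q) holomorphic_on (SB - {complex_of_real cc})"
    using SB_zeta(4) by (intro qpoch_holo_comp q holomorphic_intros) auto
  show "(\<lambda>w. qpoch (complex_of_real (a i) * w) q) holomorphic_on (SB - {complex_of_real cc})"
    by (intro qpoch_holo_comp q holomorphic_intros)
  show "qpoch (complex_of_real (a i) * w) q \<noteq> 0" if w: "w \<in> SB - {complex_of_real cc}" for w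
  proof (rule qpoch_nonzero[OF q])
    fix l
    define \<zeta> where "\<zeta> = w / complex_of_real cc - 1"
    have we: "w = complex_of_real cc * (1 + \<zeta>)" and zz: "norm \<zeta> < 2 * \<delta>" "\<zeta> \<noteq> 0"
      using SB_zeta[of w] w unfolding \<zeta>_def by auto
    have "1 - complex_of_real (a i) * w * complex_of_real (q ^ l) \<noteq> 0"
      unfolding we factor_eq by (rule factor_nz[OF i zz])
    thus "complex_of_real (a i) * w * complex_of_real (q ^ l) \<noteq> 1" by simp
  qed
qed

lemma half_pow: "1/2 \<le> (1 - \<delta> / (real uu + 1)) ^ uu"
proof -
  have d: "\<delta> \<le> 1/2" by (rule \<delta>_le(2))
  have "1 + real uu * (- (\<delta> / (real uu + 1))) \<le> (1 + - (\<delta> / (real uu + 1))) ^ uu"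
    using \<delta> d by (intro Bernoulli_inequality) (auto simp: field_simps)
  moreover have "real uu * (\<delta> / (real uu + 1)) \<le> \<delta>"
    using \<delta> by (simp add: field_simps)
  ultimately show ?thesis using d by simp
qed

lemma res_bound:
  "norm (residue QB (complex_of_real cc)) \<le>
     exp (2 / (1 - q)) ^ N / (((1/2) * LG^2) ^ N * (\<delta>1 / 2) ^ (N - 1)) * cc
       / (\<Prod>i\<in>{1..N}. \<Prod>l<uu. xx i l)"
proof -
  define \<eta> where "\<eta> = \<delta> / (real uu + 1)"
  have \<eta>: "0 < \<eta>" "\<eta> \<le> \<delta>" unfolding \<eta>_def using \<delta> by (auto simp: field_simps)
  define \<rho> where "\<rho> = \<eta> * cc"
  have \<rho>0: "0 < \<rho>" unfolding \<rho>_def using \<eta> cc0 by simp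
  have "cball (complex_of_real cc) \<rho> \<subseteq> SB"
    unfolding SB_def \<rho>_def using \<eta> cc0 \<delta> by (intro cball_subset_ball_iff[THEN iffD2]) auto
  moreover have "complex_of_real cc \<in> SB" unfolding SB_def using \<delta> cc0 by simp
  moreover have "open SB" unfolding SB_def by simp
  ultimately have hc: "(QB has_contour_integral 2 * pi * \<i> * residue QB (complex_of_real cc)) (circlepath (complex_of_real cc) \<rho>)"
    using base_residue[OF _ _ \<rho>0 QB_holo] by blast
  define U where "U = exp (2 / (1 - q))"
  define X where "X = (\<Prod>i\<in>{1..N}. \<Prod>l<uu. xx i l)"
  have X0: "0 < X" unfolding X_def using xx_pos by (intro prod_pos) auto
  define B0 where "B0 = U ^ N / (((1/2) * LG^2) ^ N * \<eta> * (\<delta>1 / 2) ^ (N - 1) * X)"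
  have U0: "0 < U" unfolding U_def by simp
  have B00: "0 \<le> B0" unfolding B0_def using U0 LG \<eta> \<delta>1 X0 by simp
  have bnd: "norm (QB w) \<le> B0" if w: "norm (w - complex_of_real cc) = \<rho>" for w
  proof -
    define \<zeta> where "\<zeta> = w / complex_of_real cc - 1"
    have we: "w = complex_of_real cc * (1 + \<zeta>)" unfolding \<zeta>_def using cc0 by (simp add: field_simps)
    have nz: "norm \<zeta> = \<eta>"
    proof -
      have "norm \<zeta> = norm (w - complex_of_real cc) / cc"
        unfolding \<zeta>_def using cc0 by (simp add: field_simps norm_divide)
      thus ?thesis using w cc0 unfolding \<rho>_def by simp
    qed
    have half: "1/2 \<le> (1 - norm \<zeta>) ^ uu" using half_pow unfolding nz \<eta>_def .
    have z: "norm \<zeta> \<le> \<delta>" using nz \<eta> by simp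
    have nw: "cc / 2 \<le> norm w"
    proof -
      have "cc - \<rho> \<le> norm w" using dist_ge[of cc w] w by (simp add: norm_minus_commute)
      moreover have "\<rho> \<le> cc / 2"
      proof -
        have "\<eta> \<le> 1/2" using \<eta>(2) \<delta>_le(2) by simp
        hence "\<eta> * cc \<le> (1/2) * cc" using cc0 by (intro mult_right_mono) auto
        thus ?thesis unfolding \<rho>_def by simp
      qed
      ultimately show ?thesis by linarith
    qed
    define low where "low i = (1/2) * LG^2 * (if i = jj then norm \<zeta> else \<delta>1 / 2) * (\<Prod>l<uu. xx i l)" for i
    have low0: "0 < low i" if "i \<in> {1..N}" for i
    proof -
      have "0 < (\<Prod>l<uu. xx i l)" using xx_pos[OF that] by (intro prod_pos) auto
      moreover have "0 < (if i = jj then norm \<zeta> else \<delta>1 / 2)" using \<delta>1 nz \<eta> by auto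
      ultimately show ?thesis unfolding low_def using LG by simp
    qed
    have "norm (QB w) = (\<Prod>i\<in>{1..N}. norm (qpoch (complex_of_real (b i) / w) q) / norm (qpoch (complex_of_real (a i) * w) q))"
      unfolding QB_def by (simp add: prod_norm[symmetric] norm_divide)
    also have "\<dots> \<le> (\<Prod>i\<in>{1..N}. U / low i)"
    proof (rule prod_mono)
      fix i assume i: "i \<in> {1..N}"
      have "norm (complex_of_real (b i) / w) \<le> 2"
      proof -
        have "norm (complex_of_real (b i) / w) = b i / norm w" using b_range[of i] i by (simp add: norm_divide)
        also have "\<dots> \<le> 1 / (cc / 2)" using b_range[of i] i nw cc0 by (intro frac_le) auto
        also have "\<dots> \<le> 2" using cc1 by (simp add: divide_le_eq)
        finally show ?thesis .
      qed
      hence u: "norm (qpoch (complex_of_real (b i) / w) q) \<le> U" unfolding U_def by (rule qpoch_upper[OF q])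
      have l: "low i \<le> norm (qpoch (complex_of_real (a i) * w) q)"
        unfolding low_def we by (rule qpoch_a_lower[OF i z half])
      show "0 \<le> norm (qpoch (complex_of_real (b i) / w) q) / norm (qpoch (complex_of_real (a i) * w) q) \<and>
          norm (qpoch (complex_of_real (b i) / w) q) / norm (qpoch (complex_of_real (a i) * w) q) \<le> U / low i"
        using u l low0[OF i] U0 by (auto intro: frac_le)
    qed
    also have "\<dots> = U ^ N / (\<Prod>i\<in>{1..N}. low i)" by (simp add: prod_dividef)
    also have "(\<Prod>i\<in>{1..N}. low i) = ((1/2) * LG^2) ^ N * \<eta> * (\<delta>1 / 2) ^ (N - 1) * X"
    proof -
      have "(\<Prod>i\<in>{1..N}. (if i = jj then norm \<zeta> else \<delta>1 / 2)) = \<eta> * (\<delta>1 / 2) ^ (N - 1)"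
      proof -
        have "(\<Prod>i\<in>{1..N}. (if i = jj then norm \<zeta> else \<delta>1 / 2))
              = (if jj = jj then norm \<zeta> else \<delta>1 / 2) * (\<Prod>i\<in>{1..N} - {jj}. (if i = jj then norm \<zeta> else \<delta>1 / 2))"
          using jj by (intro prod.remove) auto
        also have "(\<Prod>i\<in>{1..N} - {jj}. (if i = jj then norm \<zeta> else \<delta>1 / 2)) = (\<Prod>i\<in>{1..N} - {jj}. \<delta>1 / 2)"
          by (intro prod.cong) auto
        also have "\<dots> = (\<delta>1 / 2) ^ (N - 1)" using jj by simp
        finally show ?thesis using nz by simp
      qed
      moreover have "(\<Prod>i\<in>{1..N}. low i) = (\<Prod>i\<in>{1..N}. (1/2) * LG^2) * (\<Prod>i\<in>{1..N}. (if i = jj then norm \<zeta> else \<delta>1 / 2)) * X"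
        unfolding low_def X_def by (simp only: prod.distrib)
      moreover have "(\<Prod>i\<in>{1..N}. (1/2) * LG^2) = ((1/2) * LG^2) ^ N" by simp
      ultimately show ?thesis by simp
    qed
    finally show ?thesis unfolding B0_def .
  qed
  have "norm (2 * pi * \<i> * residue QB (complex_of_real cc)) \<le> B0 * (2 * pi * \<rho>)"
    by (rule has_contour_integral_bound_circlepath[OF hc B00 \<rho>0 bnd])
  hence "2 * pi * norm (residue QB (complex_of_real cc)) \<le> B0 * (2 * pi * \<rho>)"
    by (simp add: norm_mult)
  hence "norm (residue QB (complex_of_real cc)) \<le> B0 * \<rho>" by simp
  also have "B0 * \<rho> = U ^ N / (((1/2) * LG^2) ^ N * (\<delta>1 / 2) ^ (N - 1)) * cc / X"
    unfolding B0_def \<rho>_def using \<eta> X0 LG \<delta>1 by (simp add: field_simps)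
  finally show ?thesis unfolding U_def X_def .
qed

end


lemma prod_q_pow:
  fixes q :: real assumes q: "0 < q"
  shows "(\<Prod>l<n. q ^ l) = q powr (real n * (real n - 1) / 2)"
proof (induction n)
  case 0 thus ?case using q by simp
next
  case (Suc n)
  have "(\<Prod>l<Suc n. q ^ l) = q powr (real n * (real n - 1) / 2) * q powr real n"
    using Suc q by (simp add: powr_realpow)
  also have "\<dots> = q powr (real (Suc n) * (real (Suc n) - 1) / 2)"
    by (simp add: powr_add[symmetric] field_simps)
  finally show ?case .
qed

definition KB :: "real \<Rightarrow> nat \<Rightarrow> real \<Rightarrow> real" where
  "KB q N \<delta>1 = exp (2 / (1 - q)) ^ N /
     (((1/2) * exp (- ((1 + q powr (1/2)) / 2) / ((1 - (1 + q powr (1/2)) / 2) * (1 - q))) ^ 2) ^ N * (\<delta>1 / 2) ^ (N - 1))"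

context Bsetting begin

lemma KB_pos: "0 < KB q N \<delta>1"
  unfolding KB_def using \<delta>1 by simp

lemma KB_eq: "KB q N \<delta>1 = exp (2 / (1 - q)) ^ N / (((1/2) * LG^2) ^ N * (\<delta>1 / 2) ^ (N - 1))"
  unfolding KB_def LG_def \<Gamma>_def hh_def ..

lemma res_bound2:
  "norm (residue QB (complex_of_real cc)) \<le>
     KB q N \<delta>1 * cc * (a 1 / a N) ^ (uu * (N - 1)) * q powr (real N * real uu * (real uu + 1) / 2)"
proof -
  define Z where "Z = q powr (real uu * (real uu + 1) / 2)"
  have Z0: "0 < Z" unfolding Z_def using q by simp
  have Xi: "1 / (\<Prod>l<uu. xx i l) = (a jj / a i) ^ uu * Z" if i: "i \<in> {1..N}" for i
  proof -
    have "(\<Prod>l<uu. xx i l) = (a i * cc) ^ uu * (\<Prod>l<uu. q ^ l)"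
      unfolding xx_def by (simp add: prod.distrib)
    also have "(a i * cc) ^ uu = (a i / a jj) ^ uu * q powr (- (real uu * real uu))"
    proof -
      have "a i * cc = (a i / a jj) * (1 / q ^ uu)" unfolding cc_eq by simp
      hence "(a i * cc) ^ uu = ((a i / a jj) * (1 / q ^ uu)) ^ uu" by simp
      also have "\<dots> = (a i / a jj) ^ uu * (1 / q ^ uu) ^ uu" by (rule power_mult_distrib)
      also have "(1 / q ^ uu) ^ uu = q powr (- (real uu * real uu))"
      proof -
        have "(1 / q ^ uu) ^ uu = 1 / q ^ (uu * uu)" by (simp add: power_divide power_mult)
        also have "q ^ (uu * uu) = q powr (real (uu * uu))" using powr_realpow[of q "uu * uu"] q by simp
        also have "1 / q powr (real (uu * uu)) = q powr (- (real uu * real uu))"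
          by (simp add: powr_minus_divide)
        finally show ?thesis .
      qed
      finally show ?thesis .
    qed
    also have "(\<Prod>l<uu. q ^ l) = q powr (real uu * (real uu - 1) / 2)" by (rule prod_q_pow[OF q(1)])
    finally have "(\<Prod>l<uu. xx i l) = (a i / a jj) ^ uu * (q powr (- (real uu * real uu)) * q powr (real uu * (real uu - 1) / 2))"
      by (simp add: mult_ac)
    also have "q powr (- (real uu * real uu)) * q powr (real uu * (real uu - 1) / 2) = 1 / Z"
    proof -
      have e: "- (real uu * real uu) + real uu * (real uu - 1) / 2 = - (real uu * (real uu + 1) / 2)"
        by (simp add: field_simps)
      have "q powr (- (real uu * real uu)) * q powr (real uu * (real uu - 1) / 2)
            = q powr (- (real uu * (real uu + 1) / 2))" by (simp only: powr_add[symmetric] e)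
      also have "\<dots> = 1 / Z" unfolding Z_def by (rule powr_minus_divide)
      finally show ?thesis .
    qed
    finally show ?thesis using a_pos[OF i] ajj Z0 by (simp add: power_divide)
  qed
  have "1 / (\<Prod>i\<in>{1..N}. \<Prod>l<uu. xx i l) = (\<Prod>i\<in>{1..N}. 1 / (\<Prod>l<uu. xx i l))"
    by (simp add: prod_dividef)
  also have "\<dots> = (\<Prod>i\<in>{1..N}. (a jj / a i) ^ uu * Z)" by (intro prod.cong refl Xi)
  also have "\<dots> = (\<Prod>i\<in>{1..N}. (a jj / a i) ^ uu) * Z ^ N" by (simp add: prod.distrib)
  also have "(\<Prod>i\<in>{1..N}. (a jj / a i) ^ uu) \<le> (a 1 / a N) ^ (uu * (N - 1))"
  proof -
    have "(\<Prod>i\<in>{1..N}. (a jj / a i) ^ uu) = (a jj / a jj) ^ uu * (\<Prod>i\<in>{1..N} - {jj}. (a jj / a i) ^ uu)"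
      using jj by (intro prod.remove) auto
    also have "\<dots> = (\<Prod>i\<in>{1..N} - {jj}. (a jj / a i) ^ uu)" using ajj by simp
    also have "\<dots> \<le> (\<Prod>i\<in>{1..N} - {jj}. (a 1 / a N) ^ uu)"
    proof (rule prod_mono)
      fix i assume i: "i \<in> {1..N} - {jj}"
      have "a jj / a i \<le> a 1 / a N"
        using a_le1[OF jj] a_geN[of i] i ajj a_pos[of i] a_pos[of N] N by (intro frac_le) auto
      thus "0 \<le> (a jj / a i) ^ uu \<and> (a jj / a i) ^ uu \<le> (a 1 / a N) ^ uu"
        using ajj a_pos[of i] i by (auto intro: power_mono)
    qed
    also have "\<dots> = (a 1 / a N) ^ (uu * (N - 1))" using jj by (simp add: power_mult)
    finally show ?thesis .
  qed
  finally have invX: "1 / (\<Prod>i\<in>{1..N}. \<Prod>l<uu. xx i l) \<le> (a 1 / a N) ^ (uu * (N - 1)) * Z ^ N"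
    using Z0 by (simp add: mult_right_mono)
  have "norm (residue QB (complex_of_real cc)) \<le> KB q N \<delta>1 * cc / (\<Prod>i\<in>{1..N}. \<Prod>l<uu. xx i l)"
    using res_bound unfolding KB_eq .
  also have "\<dots> = KB q N \<delta>1 * cc * (1 / (\<Prod>i\<in>{1..N}. \<Prod>l<uu. xx i l))" by simp
  also have "\<dots> \<le> KB q N \<delta>1 * cc * ((a 1 / a N) ^ (uu * (N - 1)) * Z ^ N)"
    using KB_pos cc0 invX by (intro mult_left_mono) auto
  also have "Z ^ N = q powr (real N * real uu * (real uu + 1) / 2)"
    unfolding Z_def using q by (simp add: powr_power field_simps)
  finally show ?thesis by (simp add: mult_ac)
qed

end


context Bsetting begin

lemma norm_B: "norm (Bker q N a b r m) = atil q N a r powr (- real_of_int m) * norm (residue QB (complex_of_real cc))"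
proof -
  have "QB = (\<lambda>w. \<Prod>i\<in>{1..N}. qpoch (complex_of_real (b i) / w) q / qpoch (complex_of_real (a i) * w) q)"
    by (rule ext) (simp add: QB_def)
  hence "Bker q N a b r m = complex_of_real (atil q N a r powr (- real_of_int m)) * residue QB (complex_of_real cc)"
    unfolding Bker_def cc_def by simp
  thus ?thesis by (simp add: norm_mult)
qed

lemma at_eq2: "atil q N a r = a jj * q powr real uu"
  unfolding atil_eq jj_def uu_def using q by (simp add: powr_realpow)

lemma cc_eq2: "cc = (1 / a jj) * q powr (- real uu)"
  unfolding cc_def at_eq2 using ajj q by (simp add: powr_minus_divide)

lemma rat_pow: "(a 1 / a N) ^ (uu * (N - 1)) \<le> q powr ((-1/2 + \<epsilon>) * real (uu * (N - 1)))"
proof -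
  have "(a 1 / a N) ^ (uu * (N - 1)) \<le> (q powr (-1/2 + \<epsilon>)) ^ (uu * (N - 1))"
    using ratio a_pos[of 1] a_pos[of N] N by (intro power_mono) auto
  also have "\<dots> = q powr ((-1/2 + \<epsilon>) * real (uu * (N - 1)))"
    using q by (simp add: powr_power mult.commute)
  finally show ?thesis .
qed

lemma resB: "norm (residue QB (complex_of_real cc)) \<le>
   KB q N \<delta>1 * ((1 / a jj) * q powr (- real uu)) * q powr ((-1/2 + \<epsilon>) * real (uu * (N - 1)))
     * q powr (real N * real uu * (real uu + 1) / 2)"
proof -
  have "norm (residue QB (complex_of_real cc)) \<le>
     KB q N \<delta>1 * cc * (a 1 / a N) ^ (uu * (N - 1)) * q powr (real N * real uu * (real uu + 1) / 2)"
    by (rule res_bound2)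
  also have "\<dots> \<le> KB q N \<delta>1 * cc * q powr ((-1/2 + \<epsilon>) * real (uu * (N - 1))) * q powr (real N * real uu * (real uu + 1) / 2)"
    using rat_pow KB_pos cc0 by (intro mult_right_mono mult_left_mono) auto
  finally show ?thesis unfolding cc_eq2 .
qed

lemma B_pos:
  assumes m: "0 \<le> m"
  shows "norm (Bker q N a b r m) \<le> (KB q N \<delta>1 / a N * q powr (- (\<epsilon>^2 * real N / 2))) * a N powr (- real_of_int m) *
     q powr (- (real_of_int m ^ 2) / (2 * real N) + \<epsilon> * real_of_int m - (1/2 + \<epsilon>) * real uu)"
proof -
  define E where "E = - real uu * real_of_int m + (- real uu) + ((-1/2 + \<epsilon>) * real (uu * (N - 1))) + real N * real uu * (real uu + 1) / 2"
  define T where "T = - (real_of_int m ^ 2) / (2 * real N) + \<epsilon> * real_of_int m - (1/2 + \<epsilon>) * real uu"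
  have aN: "0 < a N" using a_pos[of N] N by auto
  have KB0: "0 < KB q N \<delta>1" by (rule KB_pos)
  have atp: "atil q N a r powr (- real_of_int m) = a jj powr (- real_of_int m) * q powr (- real uu * real_of_int m)"
    unfolding at_eq2 using ajj q by (simp add: powr_mult powr_powr)
  have "norm (Bker q N a b r m) \<le> atil q N a r powr (- real_of_int m) *
     (KB q N \<delta>1 * ((1 / a jj) * q powr (- real uu)) * q powr ((-1/2 + \<epsilon>) * real (uu * (N - 1)))
     * q powr (real N * real uu * (real uu + 1) / 2))"
    unfolding norm_B by (intro mult_left_mono resB) simp
  also have "\<dots> = KB q N \<delta>1 * (1 / a jj) * a jj powr (- real_of_int m) * q powr E"
    by (simp only: atp E_def powr_add mult_ac)
  also have "\<dots> \<le> KB q N \<delta>1 * (1 / a N) * a N powr (- real_of_int m) * q powr E"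
  proof -
    have "1 / a jj \<le> 1 / a N" using a_geN[OF jj] aN by (simp add: frac_le)
    moreover have "a jj powr (- real_of_int m) \<le> a N powr (- real_of_int m)"
      using a_geN[OF jj] aN m by (intro powr_mono2') auto
    ultimately show ?thesis using KB0 ajj aN
      by (intro mult_right_mono mult_mono mult_left_mono) auto
  qed
  also have "q powr E \<le> q powr (- (\<epsilon>^2 * real N / 2)) * q powr T"
  proof -
    have N0: "0 < real N" using N by simp
    have uN: "real (uu * (N - 1)) = real uu * real N - real uu" using N by (simp add: of_nat_diff algebra_simps)
    have "(E - (- (\<epsilon>^2 * real N / 2) + T)) * (2 * real N) = (real N * real uu - real_of_int m + \<epsilon> * real N)^2"
      unfolding E_def T_def uN using N0 by (simp add: field_simps power2_eq_square)
    hence "0 \<le> (E - (- (\<epsilon>^2 * real N / 2) + T)) * (2 * real N)" by simp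
    hence "- (\<epsilon>^2 * real N / 2) + T \<le> E" using N0 by (simp add: zero_le_mult_iff)
    hence "q powr E \<le> q powr (- (\<epsilon>^2 * real N / 2) + T)" using q by (intro powr_mono') auto
    also have "\<dots> = q powr (- (\<epsilon>^2 * real N / 2)) * q powr T" by (rule powr_add)
    finally show ?thesis .
  qed
  hence "KB q N \<delta>1 * (1 / a N) * a N powr (- real_of_int m) * q powr E
     \<le> KB q N \<delta>1 * (1 / a N) * a N powr (- real_of_int m) * (q powr (- (\<epsilon>^2 * real N / 2)) * q powr T)"
    using KB0 aN by (intro mult_left_mono) auto
  finally show ?thesis unfolding T_def by (simp add: mult_ac)
qed

lemma B_neg:
  assumes m: "m < 0"
  shows "norm (Bker q N a b r m) \<le> (KB q N \<delta>1 / a N) * a 1 powr (- real_of_int m) * q ^ uu"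
proof -
  define k where "k = - real_of_int m"
  have k1: "1 \<le> k" unfolding k_def using m by simp
  define E where "E = - real uu + ((-1/2) * real (uu * (N - 1))) + real N * real uu * (real uu + 1) / 2"
  have aN: "0 < a N" using a_pos[of N] N by auto
  have a1: "0 < a 1" using a_pos[of 1] N by auto
  have KB0: "0 < KB q N \<delta>1" by (rule KB_pos)
  have atp: "atil q N a r powr (- real_of_int m) = a jj powr k * q powr (real uu * k)"
    unfolding at_eq2 k_def using ajj q by (simp add: powr_mult powr_powr)
  have rp: "q powr ((-1/2 + \<epsilon>) * real (uu * (N - 1))) \<le> q powr ((-1/2) * real (uu * (N - 1)))"
  proof -
    have "(-1/2) * real (uu * (N - 1)) \<le> (-1/2 + \<epsilon>) * real (uu * (N - 1))"
      using eps by (intro mult_right_mono) auto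
    thus ?thesis using q by (intro powr_mono') auto
  qed
  have "norm (Bker q N a b r m) \<le> atil q N a r powr (- real_of_int m) *
     (KB q N \<delta>1 * ((1 / a jj) * q powr (- real uu)) * q powr ((-1/2 + \<epsilon>) * real (uu * (N - 1)))
     * q powr (real N * real uu * (real uu + 1) / 2))"
    unfolding norm_B by (intro mult_left_mono resB) simp
  also have "\<dots> \<le> atil q N a r powr (- real_of_int m) *
     (KB q N \<delta>1 * ((1 / a jj) * q powr (- real uu)) * q powr ((-1/2) * real (uu * (N - 1)))
     * q powr (real N * real uu * (real uu + 1) / 2))"
    using rp KB0 ajj by (intro mult_left_mono mult_right_mono) auto
  also have "\<dots> = KB q N \<delta>1 * (1 / a jj) * a jj powr k * q powr (real uu * k) * q powr E"
    by (simp only: atp E_def powr_add mult_ac)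
  also have "\<dots> \<le> KB q N \<delta>1 * (1 / a N) * a 1 powr k * q powr (real uu) * 1"
  proof -
    have "1 / a jj \<le> 1 / a N" using a_geN[OF jj] aN by (simp add: frac_le)
    moreover have "a jj powr k \<le> a 1 powr k" using a_le1[OF jj] ajj k1 by (intro powr_mono2) auto
    moreover have "q powr (real uu * k) \<le> q powr (real uu)"
      using q k1 by (intro powr_mono') (auto simp: mult_le_cancel_left1)
    moreover have "q powr E \<le> 1"
    proof -
      have uN: "real (uu * (N - 1)) = real uu * real N - real uu" using N by (simp add: of_nat_diff algebra_simps)
      have "E = real N * real uu * real uu / 2 - real uu / 2"
        unfolding E_def uN by (simp add: field_simps)
      moreover have "real uu \<le> real N * real uu * real uu"
      proof (cases "uu = 0")
        case False
        hence "1 * 1 \<le> real N * real uu" using N by (intro mult_mono) auto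
        hence h1: "1 \<le> real N * real uu" by simp
        show ?thesis using mult_right_mono[OF h1, of "real uu"] by simp
      qed simp
      ultimately have "0 \<le> E" by simp
      thus ?thesis using powr_mono'[of 0 E q] q by simp
    qed
    ultimately show ?thesis using KB0 ajj aN a1
      by (intro mult_mono mult_right_mono mult_left_mono) auto
  qed
  finally show ?thesis unfolding k_def using q by (simp add: powr_realpow)
qed

end


context setting begin

lemma delta1_ex: "\<exists>\<delta>1>0. \<delta>1 \<le> 1 \<and> (\<forall>i i'. i \<in> {1..N} \<longrightarrow> i' \<in> {1..N} \<longrightarrow> i \<noteq> i' \<longrightarrow> \<delta>1 \<le> \<bar>a i - a i'\<bar>)"
proof -
  define P where "P = {p \<in> {1..N} \<times> {1..N}. fst p \<noteq> snd p}"
  define D where "D = (\<lambda>p. \<bar>a (fst p) - a (snd p)\<bar>) ` P"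
  have finD: "finite D" unfolding D_def P_def by simp
  have Dpos: "0 < d" if "d \<in> D" for d
  proof -
    have "\<exists>p\<in>P. d = \<bar>a (fst p) - a (snd p)\<bar>" using that unfolding D_def by (simp add: image_iff)
    then obtain p where p: "p \<in> P" "d = \<bar>a (fst p) - a (snd p)\<bar>" by blast
    define i where "i = fst p"
    define i' where "i' = snd p"
    have ii: "i \<in> {1..N}" "i' \<in> {1..N}" "i \<noteq> i'" "d = \<bar>a i - a i'\<bar>"
      using p unfolding P_def i_def i'_def by (auto simp: mem_Times_iff)
    have "a i \<noteq> a i'"
    proof (cases "i < i'")
      case True thus ?thesis using a_dec[of i i'] ii by auto
    next
      case False hence "i' < i" using ii by auto
      thus ?thesis using a_dec[of i' i] ii by auto
    qed
    thus ?thesis using ii by auto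
  qed
  show ?thesis
  proof (cases "D = {}")
    case True
    show ?thesis
      by (rule exI[of _ 1]) (use True in \<open>auto simp: D_def P_def\<close>)
  next
    case False
    define \<delta>1 where "\<delta>1 = min 1 (Min D)"
    have "0 < Min D" using Min_in[OF finD False] Dpos by auto
    hence "0 < \<delta>1" unfolding \<delta>1_def by simp
    moreover have "\<delta>1 \<le> \<bar>a i - a i'\<bar>" if "i \<in> {1..N}" "i' \<in> {1..N}" "i \<noteq> i'" for i i'
    proof -
      have "\<bar>a i - a i'\<bar> \<in> D" unfolding D_def P_def using that by force
      hence "Min D \<le> \<bar>a i - a i'\<bar>" using finD by simp
      thus ?thesis unfolding \<delta>1_def by simp
    qed
    ultimately show ?thesis using \<delta>1_def by (intro exI[of _ \<delta>1]) auto
  qed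
qed

end

theorem lemmaB1:
  fixes q \<epsilon> t :: real and k N :: nat and a b :: "nat \<Rightarrow> real"
  assumes q: "0 < q" "q < 1"
    and N: "N \<ge> 1"
    and a_dec: "\<And>i j. 1 \<le> i \<Longrightarrow> i < j \<Longrightarrow> j \<le> N \<Longrightarrow> a j < a i"
    and a_range: "\<And>i. 1 \<le> i \<Longrightarrow> i \<le> N \<Longrightarrow> 0 < a i \<and> a i < 1"
    and b_range: "\<And>i. 1 \<le> i \<Longrightarrow> i \<le> N \<Longrightarrow> 0 < b i \<and> b i < 1"
    and b_dist: "\<And>i j. 1 \<le> i \<Longrightarrow> i \<le> N \<Longrightarrow> 1 \<le> j \<Longrightarrow> j \<le> N \<Longrightarrow> i \<noteq> j \<Longrightarrow> b i \<noteq> b j"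
    and ab_dist: "\<And>i j. 1 \<le> i \<Longrightarrow> i \<le> N \<Longrightarrow> 1 \<le> j \<Longrightarrow> j \<le> N \<Longrightarrow> a i \<noteq> b j"
    and eps: "0 < \<epsilon>" "\<epsilon> < 1/2"
    and ratio: "a 1 / a N < q powr (-1/2 + \<epsilon>)"
    and t: "t > 0"
  shows
    "(\<forall>b'. Max (b ` {1..N}) < b' \<and> b' < 1 \<longrightarrow>
        (\<exists>Cp Cm. Cp > 0 \<and> Cm > 0 \<and>
          (\<forall>m::int. \<forall>r::nat. r > 0 \<longrightarrow>
             (m \<ge> 0 \<longrightarrow> cmod (Aker q N a b t k m r) <
                Cp * a 1 powr (real_of_int m) *
                q powr (real_of_int m ^ 2 / (2 * real N) + real_of_int m / 2 + real (uidx N r))) \<and>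
             (m < 0 \<longrightarrow> cmod (Aker q N a b t k m r) <
                Cm * b' powr (- real_of_int m) * q ^ uidx N r)))) \<and>
     (\<exists>Dp Dm. Dp > 0 \<and> Dm > 0 \<and>
        (\<forall>m::int. \<forall>r::nat. r > 0 \<longrightarrow>
           (m \<ge> 0 \<longrightarrow> cmod (Bker q N a b r m) <
              Dp * a N powr (- real_of_int m) *
              q powr (- (real_of_int m ^ 2) / (2 * real N) + \<epsilon> * real_of_int m
                      - (1/2 + \<epsilon>) * real (uidx N r))) \<and>
           (m < 0 \<longrightarrow> cmod (Bker q N a b r m) <
              Dm * a 1 powr (- real_of_int m) * q ^ uidx N r)))"
proof -
  interpret S: setting q \<epsilon> N a b
    by (unfold_locales) (use q N a_dec a_range b_range eps ratio in auto)
  have a1: "0 < a 1" "a 1 < 1" using a_range[of 1] N by auto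
  have aN: "0 < a N" using a_range[of N] N by auto
  have strict: "x < 2 * K * y" if "x \<le> K * y" "0 < K" "0 < y" for x K y :: real
    using that mult_pos_pos[of K y] by linarith
  have partA: "\<forall>b'. Max (b ` {1..N}) < b' \<and> b' < 1 \<longrightarrow>
        (\<exists>Cp Cm. Cp > 0 \<and> Cm > 0 \<and>
          (\<forall>m::int. \<forall>r::nat. r > 0 \<longrightarrow>
             (m \<ge> 0 \<longrightarrow> cmod (Aker q N a b t k m r) <
                Cp * a 1 powr (real_of_int m) *
                q powr (real_of_int m ^ 2 / (2 * real N) + real_of_int m / 2 + real (uidx N r))) \<and>
             (m < 0 \<longrightarrow> cmod (Aker q N a b t k m r) <
                Cm * b' powr (- real_of_int m) * q ^ uidx N r)))"
  proof (intro allI impI)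
    fix b' assume b': "Max (b ` {1..N}) < b' \<and> b' < 1"
    hence b'': "S.Bm < b'" "b' < 1" unfolding S.Bm_def by auto
    have b'0: "0 < b'" using b'' S.Bm by linarith
    define h where "h = q powr (1/2)"
    define K0 where "K0 = exp (h / (1 - h^2)) ^ 2 / exp (- S.Bm / ((1 - S.Bm) * (1 - q)))"
    define \<kappa> where "\<kappa> = min (1 - q powr \<epsilon>) (1 - h)"
    define KA where "KA = t * K0 ^ N / \<kappa> * q powr (- real N / 2)"
    define MM where "MM = (exp (1 / (1 - q)) / exp (- (S.Bm/b') / ((1 - S.Bm/b') * (1 - q)))) ^ N"
    have h0: "0 < h" "h < 1" unfolding h_def using q powr_less_mono2[of "1/2" q 1] by auto
    have \<kappa>0: "0 < \<kappa>" unfolding \<kappa>_def using h0 q eps powr_less_mono2[of \<epsilon> q 1] by auto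
    have K00: "0 < K0" unfolding K0_def by simp
    have KA0: "0 < KA" unfolding KA_def using t \<kappa>0 K00 q
      by (intro mult_pos_pos divide_pos_pos zero_less_power) auto
    have MM0: "0 < MM / (1 - a 1)" unfolding MM_def using a1 by simp
    show "\<exists>Cp Cm. Cp > 0 \<and> Cm > 0 \<and>
          (\<forall>m::int. \<forall>r::nat. r > 0 \<longrightarrow>
             (m \<ge> 0 \<longrightarrow> cmod (Aker q N a b t k m r) <
                Cp * a 1 powr (real_of_int m) *
                q powr (real_of_int m ^ 2 / (2 * real N) + real_of_int m / 2 + real (uidx N r))) \<and>
             (m < 0 \<longrightarrow> cmod (Aker q N a b t k m r) <
                Cm * b' powr (- real_of_int m) * q ^ uidx N r))"
    proof -
      have Apos: "cmod (Aker q N a b t k m r) < 2 * KA * a 1 powr (real_of_int m) *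
                q powr (real_of_int m ^ 2 / (2 * real N) + real_of_int m / 2 + real (uidx N r))"
        if r: "r > 0" and m: "0 \<le> m" for m :: int and r :: nat
      proof -
        have "cmod (Aker q N a b t k m r) \<le> KA * (a 1 powr (real_of_int m) *
                q powr (real_of_int m ^ 2 / (2 * real N) + real_of_int m / 2 + real (uidx N r)))"
          using S.A_pos[OF r t m, of k] unfolding KA_def K0_def \<kappa>_def h_def by (simp add: mult_ac)
        from strict[OF this KA0] a1 q show ?thesis by (simp add: mult_ac)
      qed
      have Aneg: "cmod (Aker q N a b t k m r) < 2 * (MM / (1 - a 1)) * b' powr (- real_of_int m) * q ^ uidx N r"
        if r: "r > 0" and m: "m < 0" for m :: int and r :: nat
      proof -
        have "cmod (Aker q N a b t k m r) \<le> (MM / (1 - a 1)) * (b' powr (- real_of_int m) * q ^ uidx N r)"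
          using S.A_neg[OF r t b'', of k m] unfolding MM_def by (simp add: mult_ac)
        from strict[OF this MM0] b'0 q show ?thesis by (simp add: mult_ac)
      qed
      have "0 < 2 * KA" "0 < 2 * (MM / (1 - a 1))" using KA0 MM0 by auto
      thus ?thesis using Apos Aneg by blast
    qed
  qed
  obtain \<delta>1 where \<delta>1: "0 < \<delta>1" "\<delta>1 \<le> 1"
    "\<And>i i'. i \<in> {1..N} \<Longrightarrow> i' \<in> {1..N} \<Longrightarrow> i \<noteq> i' \<Longrightarrow> \<delta>1 \<le> \<bar>a i - a i'\<bar>"
    using S.delta1_ex by blast
  define KBB where "KBB = KB q N \<delta>1"
  have KBB0: "0 < KBB" unfolding KBB_def KB_def using \<delta>1 by simp
  define Dp where "Dp = 2 * (KBB / a N * q powr (- (\<epsilon>^2 * real N / 2)))"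
  define Dm where "Dm = 2 * (KBB / a N)"
  have partB: "\<forall>m::int. \<forall>r::nat. r > 0 \<longrightarrow>
           (m \<ge> 0 \<longrightarrow> cmod (Bker q N a b r m) <
              Dp * a N powr (- real_of_int m) *
              q powr (- (real_of_int m ^ 2) / (2 * real N) + \<epsilon> * real_of_int m
                      - (1/2 + \<epsilon>) * real (uidx N r))) \<and>
           (m < 0 \<longrightarrow> cmod (Bker q N a b r m) <
              Dm * a 1 powr (- real_of_int m) * q ^ uidx N r)"
  proof (intro allI impI conjI)
    fix m :: int and r :: nat assume r: "r > 0"
    interpret B: Bsetting q \<epsilon> N a b r \<delta>1
      using S.setting_axioms r \<delta>1 by (simp add: Bsetting_def Bsetting_axioms_def)
    have K1: "0 < KBB / a N * q powr (- (\<epsilon>^2 * real N / 2))" using KBB0 aN q by simp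
    have K2: "0 < KBB / a N" using KBB0 aN by simp
    {
      assume m: "0 \<le> m"
      have "cmod (Bker q N a b r m) \<le> (KBB / a N * q powr (- (\<epsilon>^2 * real N / 2))) *
         (a N powr (- real_of_int m) * q powr (- (real_of_int m ^ 2) / (2 * real N) + \<epsilon> * real_of_int m
                      - (1/2 + \<epsilon>) * real (uidx N r)))"
        using B.B_pos[OF m] unfolding KBB_def B.uu_def by (simp add: mult_ac)
      from strict[OF this K1] aN q
      show "cmod (Bker q N a b r m) < Dp * a N powr (- real_of_int m) *
              q powr (- (real_of_int m ^ 2) / (2 * real N) + \<epsilon> * real_of_int m - (1/2 + \<epsilon>) * real (uidx N r))"
        unfolding Dp_def by (simp add: mult_ac)
    }
    {
      assume m: "m < 0"
      have "cmod (Bker q N a b r m) \<le> (KBB / a N) * (a 1 powr (- real_of_int m) * q ^ uidx N r)"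
        using B.B_neg[OF m] unfolding KBB_def B.uu_def by (simp add: mult_ac)
      from strict[OF this K2] a1 q
      show "cmod (Bker q N a b r m) < Dm * a 1 powr (- real_of_int m) * q ^ uidx N r"
        unfolding Dm_def by (simp add: mult_ac)
    }
  qed
  have "Dp > 0" "Dm > 0" unfolding Dp_def Dm_def using KBB0 aN q by auto
  with partA partB show ?thesis by blast
qed


end
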